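(* Let $d\in\mathbb{N}$, $0<\beta<d$, and $R,r,c>0$ with $R>3r$, and let $\mu$ and $f^*$ be as defined below. Suppose \[ c\leq\frac{1-\beta/d}{2400\left(1+\frac{R}{r}\right)^{\beta}}. \] Then there exists $m_0\in\mathbb{N}$ such that for every $\mathbf{x}\in B(\mathbf{0},r)$, every $m>m_0$ and every $p\in(0,0.49)$, with probability at least $1-\tilde{\mathcal{O}}_m\Big(\frac{1}{m}+\frac{1}{m^{(1-\beta/d)/(\beta/d)}}\Big)$ over the training set $S$, it holds that $\hat{h}_\beta(\mathbf{x})=1$.
   Context: $V_d$ denotes the volume of the unit ball in $\mathbb{R}^d$ and $B(\mathbf{z},s)$ the closed Euclidean ball. The density is $\mu(\mathbf{x})=\frac{c}{V_dr^d}$ if $\|\mathbf{x}\|<r$, $\mu(\mathbf{x})=\frac{1-c}{V_d(R^d-(3r)^d)}$ if $3r\leq\|\mathbf{x}\|\leq R$, and $0$ otherwise. The target is $f^*(\mathbf{x})=-1$ if $\|\mathbf{x}\|\leq r$ and $f^*(\mathbf{x})=1$ otherwise. Training set $S=(\mathbf{x}_i,y_i)_{i=1}^m$: $\mathbf{x}_i$ i.i.d. with density $\mu$, and independently $y_i=f^*(\mathbf{x}_i)$ with probability $1-p$, $y_i=-f^*(\mathbf{x}_i)$ with probability $p$. $\hat{h}_\beta(\mathbf{x})=\mathrm{sign}\big(\sum_{i=1}^m y_i\|\mathbf{x}-\mathbf{x}_i\|^{-\beta}\big)$ for $\mathbf{x}$ not a sample point and $\hat{h}_\beta(\mathbf{x}_i)=y_i$.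 $\tilde{\mathcal{O}}_m$ hides constants independent of $m$ and logarithmic factors in $m$. *)

theory Defs
  imports "HOL-Analysis.Analysis" "HOL-Probability.Probability"
begin

definition Vd :: "'a::euclidean_space itself \<Rightarrow> real" where
  "Vd _ = measure lborel (ball (0::'a) 1)"

definition mu_dens :: "real \<Rightarrow> real \<Rightarrow> real \<Rightarrow> 'a::euclidean_space \<Rightarrow> real" where
  "mu_dens r R c x =
     (let d = DIM('a); V = Vd TYPE('a) in
      if norm x < r then c / (V * r ^ d)
      else if 3 * r \<le> norm x \<and> norm x \<le> R then (1 - c) / (V * (R ^ d - (3 * r) ^ d))
      else 0)"

definition fstar :: "real \<Rightarrow> 'a::real_normed_vector \<Rightarrow> real" where
  "fstar r x = (if norm x \<le> r then -1 else 1)"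

text \<open>Distribution of one training example: the point x_i with density mu, and
  independently a flip bit which is True with probability p (label flipped).\<close>
definition example_measure :: "real \<Rightarrow> real \<Rightarrow> real \<Rightarrow> real \<Rightarrow> ('a::euclidean_space \<times> bool) measure" where
  "example_measure r R c p =
     density lborel (\<lambda>x. ennreal (mu_dens r R c x)) \<Otimes>\<^sub>M measure_pmf (bernoulli_pmf p)"

definition sample_measure :: "nat \<Rightarrow> real \<Rightarrow> real \<Rightarrow> real \<Rightarrow> real \<Rightarrow> (nat \<Rightarrow> 'a::euclidean_space \<times> bool) measure" where
  "sample_measure m r R c p = PiM {..<m} (\<lambda>_. example_measure r R c p)"

definition label :: "real \<Rightarrow> (nat \<Rightarrow> 'a::euclidean_space \<times> bool) \<Rightarrow> nat \<Rightarrow> real" where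
  "label r S i = (if snd (S i) then - fstar r (fst (S i)) else fstar r (fst (S i)))"

text \<open>The interpolating predictor h_beta.  At a sample point it returns that point's
  label (the first index if the point is repeated, a null event); elsewhere the sign
  of the weighted sum.\<close>
definition hhat :: "real \<Rightarrow> nat \<Rightarrow> real \<Rightarrow> (nat \<Rightarrow> 'a::euclidean_space \<times> bool) \<Rightarrow> 'a \<Rightarrow> real" where
  "hhat \<beta> m r S x =
     (if \<exists>i<m. fst (S i) = x then label r S (LEAST i. i < m \<and> fst (S i) = x)
      else sgn (\<Sum>i<m. label r S i * norm (x - fst (S i)) powr (- \<beta>)))"

end

theory Submission
  imports Defs "HOL-Analysis.Harmonic_Numbers" "HOL-Analysis.Complex_Transcendental"
begin

lemma Vd_eq: "Vd TYPE('a::euclidean_space) = unit_ball_vol (DIM('a))"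
  unfolding Vd_def measure_def using emeasure_ball[of 1 "0::'a"] by simp

lemma Vd_pos: "Vd TYPE('a::euclidean_space) > 0"
  by (simp add: Vd_eq)

lemma emeasure_ball_Vd: "\<rho> \<ge> 0 \<Longrightarrow> emeasure lborel (ball (z::'a::euclidean_space) \<rho>) = ennreal (Vd TYPE('a) * \<rho> ^ DIM('a))"
  using emeasure_ball[of \<rho> z] by (simp add: Vd_eq)

lemma emeasure_cball_Vd: "\<rho> \<ge> 0 \<Longrightarrow> emeasure lborel (cball (z::'a::euclidean_space) \<rho>) = ennreal (Vd TYPE('a) * \<rho> ^ DIM('a))"
  using emeasure_cball[of \<rho> z] by (simp add: Vd_eq)

lemma geom_bound:
  fixes \<alpha> d :: real
  assumes "0 < \<alpha>" "\<alpha> < d"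
  shows "1 + 2 / (1 - 2 powr (1 - d / \<alpha>)) \<le> 3 * d / (d - \<alpha>)"
proof -
  define s where "s = ln 2 * (d / \<alpha> - 1)"
  have da: "d / \<alpha> > 1" using assms by simp
  have l2: "ln (2::real) \<ge> 2/3" by (rule ln2_ge_two_thirds)
  have s_pos: "s > 0" unfolding s_def using da l2 by simp
  have g: "2 powr (1 - d / \<alpha>) = exp (- s)"
    unfolding s_def powr_def by (simp add: algebra_simps)
  have es: "exp s \<ge> 1 + s" by (rule exp_ge_add_one_self)
  have "1 / (1 - exp (-s)) = 1 + 1 / (exp s - 1)"
    using s_pos by (simp add: exp_minus field_simps)
  also have "\<dots> \<le> 1 + 1 / s"
  proof -
    have h: "exp s - 1 \<ge> s" using es by linarith
    have "1 / (exp s - 1) \<le> 1 / s" using s_pos h by (intro divide_left_mono) auto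
    thus ?thesis by simp
  qed
  also have "1 + 1 / s = 1 + \<alpha> / (ln 2 * (d - \<alpha>))"
    unfolding s_def using assms by (simp add: field_simps)
  also have "\<dots> \<le> 1 + \<alpha> / (2/3 * (d - \<alpha>))"
    using assms l2 by (intro add_left_mono divide_left_mono mult_right_mono mult_pos_pos) auto
  finally have "1 / (1 - exp (-s)) \<le> 1 + \<alpha> / (2/3 * (d - \<alpha>))" .
  hence "1 + 2 * (1 / (1 - exp (-s))) \<le> 1 + 2 * (1 + \<alpha> / (2/3 * (d - \<alpha>)))" by simp
  also have "\<dots> = 3 * d / (d - \<alpha>)" using assms by (simp add: field_simps)
  finally show ?thesis by (simp add: g)
qed

lemma dyadic_key:
  fixes u \<rho> \<alpha> :: real
  assumes a: "0 < \<alpha>" and u: "0 < u" "u < \<rho>"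
  shows "\<exists>k::nat. u < \<rho> * (2 powr (-1/\<alpha>)) ^ k \<and> u powr (-\<alpha>) \<le> \<rho> powr (-\<alpha>) * 2 ^ (k+1)"
proof -
  define v where "v = (\<rho>/u) powr \<alpha>"
  have "\<rho>/u > 1" using u by simp
  hence v1: "v > 1" unfolding v_def using a by (simp add: gr_one_powr)
  have "\<exists>n::nat. v < 2 ^ n" by (rule real_arch_pow) simp
  then obtain n::nat where "v \<le> 2 ^ (n+1)"
    by (metis less_eq_real_def one_le_numeral power_increasing le_add1 order_trans)
  define k where "k = (LEAST k::nat. v \<le> 2 ^ (k+1))"
  have k1: "v \<le> 2 ^ (k+1)" unfolding k_def by (rule LeastI) fact
  have k2: "2 ^ k < v"
  proof (cases k)
    case 0 thus ?thesis using v1 by simp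
  next
    case (Suc j)
    have "\<not> v \<le> 2 ^ (j+1)"
    proof
      assume "v \<le> 2 ^ (j+1)"
      hence "k \<le> j" unfolding k_def by (rule Least_le)
      thus False using Suc by simp
    qed
    thus ?thesis using Suc by simp
  qed
  have rv: "\<rho>/u = v powr (1/\<alpha>)" unfolding v_def using a u by (simp add: powr_powr)
  have tk: "(2 powr (-1/\<alpha>)) ^ k = 2 powr (- real k / \<alpha>)"
  proof -
    have "(2 powr (-1/\<alpha>)) ^ k = (2::real) powr (real k * (-1/\<alpha>))" by (rule powr_power) simp
    thus ?thesis by simp
  qed
  have "(2 ^ k) powr (1/\<alpha>) < v powr (1/\<alpha>)"
    using k2 a by (intro powr_less_mono2) auto
  moreover have "(2 ^ k) powr (1/\<alpha>) = (2::real) powr (real k / \<alpha>)"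
    by (simp add: powr_realpow[symmetric] powr_powr)
  ultimately have "2 powr (real k / \<alpha>) < \<rho> / u" using rv by simp
  hence "u * 2 powr (real k / \<alpha>) < \<rho>" using u by (simp add: field_simps)
  hence "u < \<rho> / 2 powr (real k / \<alpha>)" by (simp add: field_simps)
  hence A: "u < \<rho> * (2 powr (-1/\<alpha>)) ^ k" 
    using tk by (simp add: powr_minus_divide divide_inverse powr_minus)
  have "u powr (-\<alpha>) = \<rho> powr (-\<alpha>) * v"
    unfolding v_def using u by (simp add: powr_divide powr_minus field_simps)
  also have "\<dots> \<le> \<rho> powr (-\<alpha>) * 2 ^ (k+1)" using k1 by (intro mult_left_mono) auto
  finally show ?thesis using A by blast
qed

lemma balls_borel[measurable]:
  "ball (z::'a::euclidean_space) \<rho> \<in> sets borel" "cball (z::'a::euclidean_space) \<rho> \<in> sets borel"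
  by auto

lemma ennreal_le_suminf: "(f::nat \<Rightarrow> ennreal) k \<le> suminf f"
proof -
  have "sum f {k} \<le> suminf f" by (rule sum_le_suminf) auto
  thus ?thesis by simp
qed

lemma dyadic_bound:
  fixes x z :: "'a::euclidean_space" and \<alpha> \<rho> :: real
  assumes a: "0 < \<alpha>" "\<alpha> < real DIM('a)" and rho: "0 < \<rho>"
  shows "(\<integral>\<^sup>+y. ennreal (indicator (ball z \<rho>) y * norm (x - y) powr (-\<alpha>)) \<partial>lborel)
         \<le> ennreal (3 * DIM('a) / (DIM('a) - \<alpha>) * Vd TYPE('a) * \<rho> powr (DIM('a) - \<alpha>))"
proof -
  define d where "d = DIM('a)"
  define V where "V = Vd TYPE('a)"
  define t where "t = (2::real) powr (-1/\<alpha>)"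
  define w where "w k = \<rho> powr (-\<alpha>) * 2 ^ (k+1)" for k :: nat
  have Vpos: "V > 0" unfolding V_def by (rule Vd_pos)
  have tpos: "t > 0" unfolding t_def by simp
  have w_nn: "w k \<ge> 0" for k unfolding w_def by simp
  have pw: "ennreal (indicator (ball z \<rho>) y * norm (x - y) powr (-\<alpha>))
      \<le> ennreal (\<rho> powr (-\<alpha>)) * indicator (ball z \<rho>) y
         + (\<Sum>k. ennreal (w k) * indicator (ball x (\<rho> * t ^ k)) y)" for y
  proof (cases "y \<in> ball z \<rho> \<and> x \<noteq> y")
    case False
    thus ?thesis by (auto simp: indicator_def)
  next
    case True
    define u where "u = norm (x - y)"
    have upos: "u > 0" using True unfolding u_def by simp
    show ?thesis
    proof (cases "u < \<rho>")
      case False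
      have "u powr (-\<alpha>) \<le> \<rho> powr (-\<alpha>)"
        using False rho a by (intro powr_mono2') auto
      hence "ennreal (indicator (ball z \<rho>) y * norm (x - y) powr (-\<alpha>))
          \<le> ennreal (\<rho> powr (-\<alpha>)) * indicator (ball z \<rho>) y"
        using True unfolding u_def by (simp add: ennreal_leI)
      thus ?thesis by (rule order_trans) simp
    next
      case True2: True
      obtain k where k1: "u < \<rho> * t ^ k" and k2: "u powr (-\<alpha>) \<le> w k"
        using dyadic_key[OF a(1) upos True2] unfolding t_def w_def by blast
      have yin: "y \<in> ball x (\<rho> * t ^ k)" using k1 unfolding u_def by (simp add: dist_norm)
      have "ennreal (indicator (ball z \<rho>) y * norm (x - y) powr (-\<alpha>)) = ennreal (u powr (-\<alpha>))"
        using True unfolding u_def by simp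
      also have "\<dots> \<le> ennreal (w k) * indicator (ball x (\<rho> * t ^ k)) y"
        using yin k2 by (simp add: ennreal_leI)
      also have "\<dots> \<le> (\<Sum>k. ennreal (w k) * indicator (ball x (\<rho> * t ^ k)) y)"
        by (rule ennreal_le_suminf)
      also have "\<dots> \<le> ennreal (\<rho> powr (-\<alpha>)) * indicator (ball z \<rho>) y
         + (\<Sum>k. ennreal (w k) * indicator (ball x (\<rho> * t ^ k)) y)" by simp
      finally show ?thesis .
    qed
  qed
  have "(\<integral>\<^sup>+y. ennreal (indicator (ball z \<rho>) y * norm (x - y) powr (-\<alpha>)) \<partial>lborel)
      \<le> (\<integral>\<^sup>+y. ennreal (\<rho> powr (-\<alpha>)) * indicator (ball z \<rho>) y
         + (\<Sum>k. ennreal (w k) * indicator (ball x (\<rho> * t ^ k)) y) \<partial>lborel)"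
    by (rule nn_integral_mono) (rule pw)
  also have "\<dots> = (\<integral>\<^sup>+y. ennreal (\<rho> powr (-\<alpha>)) * indicator (ball z \<rho>) y \<partial>lborel)
      + (\<integral>\<^sup>+y. (\<Sum>k. ennreal (w k) * indicator (ball x (\<rho> * t ^ k)) y) \<partial>lborel)"
    by (rule nn_integral_add) measurable
  also have "(\<integral>\<^sup>+y. (\<Sum>k. ennreal (w k) * indicator (ball x (\<rho> * t ^ k)) y) \<partial>lborel)
      = (\<Sum>k. \<integral>\<^sup>+y. ennreal (w k) * indicator (ball x (\<rho> * t ^ k)) y \<partial>lborel)"
    by (rule nn_integral_suminf) measurable
  also have "(\<lambda>k. \<integral>\<^sup>+y. ennreal (w k) * indicator (ball x (\<rho> * t ^ k)) y \<partial>lborel)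
      = (\<lambda>k. ennreal (w k * (V * (\<rho> * t ^ k) ^ d)))"
  proof
    fix k
    have "(\<integral>\<^sup>+y. ennreal (w k) * indicator (ball x (\<rho> * t ^ k)) y \<partial>lborel)
        = ennreal (w k) * emeasure lborel (ball x (\<rho> * t ^ k))"
      by (rule nn_integral_cmult_indicator) simp
    also have "\<dots> = ennreal (w k * (V * (\<rho> * t ^ k) ^ d))"
      using rho tpos w_nn Vpos by (simp add: emeasure_ball_Vd V_def d_def ennreal_mult)
    finally show "(\<integral>\<^sup>+y. ennreal (w k) * indicator (ball x (\<rho> * t ^ k)) y \<partial>lborel)
        = ennreal (w k * (V * (\<rho> * t ^ k) ^ d))" .
  qed
  also have "(\<integral>\<^sup>+y. ennreal (\<rho> powr (-\<alpha>)) * indicator (ball z \<rho>) y \<partial>lborel)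
      = ennreal (\<rho> powr (-\<alpha>) * (V * \<rho> ^ d))"
  proof -
    have "(\<integral>\<^sup>+y. ennreal (\<rho> powr (-\<alpha>)) * indicator (ball z \<rho>) y \<partial>lborel)
        = ennreal (\<rho> powr (-\<alpha>)) * emeasure lborel (ball z \<rho>)"
      by (rule nn_integral_cmult_indicator) simp
    also have "\<dots> = ennreal (\<rho> powr (-\<alpha>) * (V * \<rho> ^ d))"
      using rho Vpos by (simp add: emeasure_ball_Vd V_def d_def ennreal_mult)
    finally show ?thesis .
  qed
  finally have I1: "(\<integral>\<^sup>+y. ennreal (indicator (ball z \<rho>) y * norm (x - y) powr (-\<alpha>)) \<partial>lborel)
      \<le> ennreal (\<rho> powr (-\<alpha>) * (V * \<rho> ^ d))
      + (\<Sum>k. ennreal (w k * (V * (\<rho> * t ^ k) ^ d)))" .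
  define g where "g = (2::real) powr (1 - d / \<alpha>)"
  have g_eq: "2 * t ^ d = g"
  proof -
    have "t ^ d = (2::real) powr (real d * (-1/\<alpha>))" unfolding t_def by (rule powr_power) simp
    hence "2 * t ^ d = 2 powr 1 * 2 powr (real d * (-1/\<alpha>))" by simp
    also have "\<dots> = g" unfolding g_def using powr_add[of 2 1 "-(real d/\<alpha>)"] by simp
    finally show ?thesis .
  qed
  have dpos: "real d > \<alpha>" using a unfolding d_def by simp
  have g1: "g < 1" unfolding g_def using dpos a by (intro powr_less_one) (auto simp: field_simps)
  have g0: "g \<ge> 0" unfolding g_def by simp
  define K where "K = 2 * V * \<rho> powr (-\<alpha>) * \<rho> ^ d"
  have term_eq: "w k * (V * (\<rho> * t ^ k) ^ d) = K * g ^ k" for k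
  proof -
    have e: "(t^k)^d = (t^d)^k" by (metis power_mult mult.commute)
    have "w k * (V * (\<rho> * t ^ k) ^ d) = (\<rho> powr (-\<alpha>) * (2 * 2^k)) * (V * (\<rho>^d * (t^d)^k))"
      unfolding w_def by (simp only: power_mult_distrib e power_Suc Suc_eq_plus1[symmetric])
    also have "\<dots> = K * (2^k * (t^d)^k)" unfolding K_def by (simp only: mult_ac)
    also have "\<dots> = K * g ^ k" unfolding g_eq[symmetric] by (simp only: power_mult_distrib)
    finally show ?thesis .
  qed
  have Kpos: "K \<ge> 0" unfolding K_def using Vpos rho by simp
  have "(\<lambda>k. K * g ^ k) sums (K * (1 / (1 - g)))"
    by (rule sums_mult) (rule geometric_sums, use g0 g1 in simp)
  hence sums: "(\<lambda>k. w k * (V * (\<rho> * t ^ k) ^ d)) sums (K / (1 - g))"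
    unfolding term_eq by simp
  have tnn: "0 \<le> w k * (V * (\<rho> * t ^ k) ^ d)" for k
    unfolding term_eq using Kpos g0 by simp
  have "(\<Sum>k. ennreal (w k * (V * (\<rho> * t ^ k) ^ d))) = ennreal (K / (1 - g))"
    by (rule suminf_ennreal_eq[OF tnn sums])
  moreover have "ennreal (\<rho> powr (-\<alpha>) * (V * \<rho> ^ d) + K / (1 - g))
     = ennreal (\<rho> powr (-\<alpha>) * (V * \<rho> ^ d)) + ennreal (K / (1 - g))"
    using Kpos g1 Vpos rho by (intro ennreal_plus) auto
  ultimately have I2: "(\<integral>\<^sup>+y. ennreal (indicator (ball z \<rho>) y * norm (x - y) powr (-\<alpha>)) \<partial>lborel)
      \<le> ennreal (\<rho> powr (-\<alpha>) * (V * \<rho> ^ d) + K / (1 - g))"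
    using I1 by simp
  define A where "A = \<rho> powr (real d - \<alpha>)"
  have rd0: "\<rho> ^ d = \<rho> powr real d" using rho by (simp add: powr_realpow)
  have rd: "\<rho> powr (-\<alpha>) * \<rho> ^ d = A"
    unfolding rd0 A_def using powr_add[of \<rho> "-\<alpha>" "real d"] by simp
  have e1: "\<rho> powr (-\<alpha>) * (V * \<rho> ^ d) = V * A" using rd by (simp only: mult_ac)
  have e2: "K = 2 * V * A" unfolding K_def using rd by (simp only: mult_ac)
  have alg: "V * A + 2 * V * A / (1 - g) = V * A * (1 + 2 / (1 - g))" for A
    using g1 by (simp add: field_simps)
  have "\<rho> powr (-\<alpha>) * (V * \<rho> ^ d) + K / (1 - g) = V * \<rho> powr (real d - \<alpha>) * (1 + 2 / (1 - g))"
    unfolding e1 e2 alg A_def ..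
  also have "\<dots> \<le> V * \<rho> powr (real d - \<alpha>) * (3 * d / (d - \<alpha>))"
    unfolding g_def using geom_bound[OF a(1) dpos] Vpos by (intro mult_left_mono) auto
  also have "\<dots> = 3 * d / (d - \<alpha>) * V * \<rho> powr (real d - \<alpha>)" by (simp only: mult_ac)
  finally have "\<rho> powr (-\<alpha>) * (V * \<rho> ^ d) + K / (1 - g) \<le> 3 * d / (d - \<alpha>) * V * \<rho> powr (real d - \<alpha>)" .
  with I2 show ?thesis unfolding d_def V_def by (meson ennreal_leI order_trans)
qed

definition annulus :: "real \<Rightarrow> real \<Rightarrow> 'a::euclidean_space set" where
  "annulus r R = cball 0 R - ball 0 (3 * r)"

lemma annulus_iff: "y \<in> annulus r R \<longleftrightarrow> 3 * r \<le> norm y \<and> norm y \<le> R"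
  unfolding annulus_def by (auto simp: dist_norm)

lemma annulus_borel[measurable]: "annulus r R \<in> sets borel"
  unfolding annulus_def by auto

lemma emeasure_annulus:
  assumes "0 < r" "3 * r < R"
  shows "emeasure lborel (annulus r R :: 'a::euclidean_space set)
         = ennreal (Vd TYPE('a) * (R ^ DIM('a) - (3 * r) ^ DIM('a)))"
proof -
  have sub: "ball (0::'a) (3 * r) \<subseteq> cball 0 R" using assms by auto
  have "emeasure lborel (annulus r R :: 'a set) = emeasure lborel (cball (0::'a) R) - emeasure lborel (ball (0::'a) (3*r))"
    unfolding annulus_def by (intro emeasure_Diff) (use sub assms in \<open>auto simp: emeasure_ball_Vd\<close>)
  also have "\<dots> = ennreal (Vd TYPE('a) * R ^ DIM('a)) - ennreal (Vd TYPE('a) * (3 * r) ^ DIM('a))"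
    using assms by (simp add: emeasure_ball_Vd emeasure_cball_Vd)
  also have "\<dots> = ennreal (Vd TYPE('a) * R ^ DIM('a) - Vd TYPE('a) * (3 * r) ^ DIM('a))"
    using assms Vd_pos[where 'a='a] by (intro ennreal_minus) auto
  finally show ?thesis by (simp add: algebra_simps)
qed

lemma mu_dens_eq:
  assumes "0 < r"
  shows "mu_dens r R c (y::'a::euclidean_space)
    = c / (Vd TYPE('a) * r ^ DIM('a)) * indicator (ball 0 r) y
      + (1 - c) / (Vd TYPE('a) * (R ^ DIM('a) - (3 * r) ^ DIM('a))) * indicator (annulus r R) y"
  using assms unfolding mu_dens_def Let_def by (auto simp: indicator_def annulus_iff dist_norm)

lemma mu_dens_nonneg:
  assumes "0 < r" "3 * r < R" "0 \<le> c" "c \<le> 1"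
  shows "mu_dens r R c (y::'a::euclidean_space) \<ge> 0"
proof -
  have "(3 * r) ^ DIM('a) < R ^ DIM('a)" using assms by (intro power_strict_mono) auto
  thus ?thesis using assms Vd_pos[where 'a='a] unfolding mu_dens_def Let_def by auto
qed

lemma mu_dens_borel[measurable]: "mu_dens r R c \<in> borel_measurable borel"
  unfolding mu_dens_def Let_def by measurable

lemma nn_integral_mu:
  assumes "0 < r" "3 * r < R" "0 \<le> c" "c \<le> 1"
  shows "(\<integral>\<^sup>+y. ennreal (mu_dens r R c (y::'a::euclidean_space)) \<partial>lborel) = 1"
proof -
  define V where "V = Vd TYPE('a)"
  define d where "d = DIM('a)"
  have V: "V > 0" unfolding V_def by (rule Vd_pos)
  have Rd: "(3 * r) ^ d < R ^ d" using assms unfolding d_def by (intro power_strict_mono) auto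
  define a where "a = c / (V * r ^ d)"
  define b where "b = (1 - c) / (V * (R ^ d - (3 * r) ^ d))"
  have a0: "a \<ge> 0" unfolding a_def using assms V by simp
  have b0: "b \<ge> 0" unfolding b_def using assms V Rd by simp
  have "(\<integral>\<^sup>+y. ennreal (mu_dens r R c (y::'a)) \<partial>lborel)
      = (\<integral>\<^sup>+y. ennreal a * indicator (ball 0 r) (y::'a) + ennreal b * indicator (annulus r R) y \<partial>lborel)"
    by (intro nn_integral_cong) (use a0 b0 in \<open>simp add: mu_dens_eq[OF assms(1)] a_def b_def V_def d_def ennreal_plus ennreal_mult' indicator_def\<close>)
  also have "\<dots> = ennreal a * emeasure lborel (ball (0::'a) r) + ennreal b * emeasure lborel (annulus r R :: 'a set)"
    by (simp add: nn_integral_add nn_integral_cmult_indicator)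
  also have "\<dots> = ennreal (a * (V * r ^ d)) + ennreal (b * (V * (R ^ d - (3 * r) ^ d)))"
    using assms a0 b0 V Rd by (simp add: emeasure_ball_Vd emeasure_annulus V_def d_def ennreal_mult)
  also have "a * (V * r ^ d) = c" unfolding a_def using V assms by simp
  also have "b * (V * (R ^ d - (3 * r) ^ d)) = 1 - c" unfolding b_def using V Rd by simp
  finally show ?thesis using assms by (simp add: ennreal_plus[symmetric] del: ennreal_plus)
qed

locale setting =
  fixes r R c p :: real
  assumes r_pos: "0 < r" and rR: "3 * r < R" and c_nn: "0 \<le> c" and c_le: "c \<le> 1"
    and p_nn: "0 \<le> p" and p_le: "p \<le> 1"
begin

definition D :: "'a::euclidean_space measure" where
  "D = density lborel (\<lambda>x. ennreal (mu_dens r R c x))"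

definition P :: "bool measure" where "P = measure_pmf (bernoulli_pmf p)"

lemma M_eq: "example_measure r R c p = (D :: 'a::euclidean_space measure) \<Otimes>\<^sub>M P"
  unfolding example_measure_def D_def P_def ..

lemma prob_D: "prob_space (D :: 'a::euclidean_space measure)"
proof
  show "emeasure (D :: 'a measure) (space D) = 1"
    unfolding D_def using r_pos rR c_nn c_le
    by (simp add: emeasure_density nn_integral_mu)
qed

lemma prob_P: "prob_space P"
  unfolding P_def by (rule prob_space_measure_pmf)

lemma prob_M: "prob_space (example_measure r R c p :: ('a::euclidean_space \<times> bool) measure)"
proof -
  interpret DD: prob_space "D :: 'a measure" by (rule prob_D)
  interpret PP: prob_space P by (rule prob_P)
  interpret pair_prob_space "D :: 'a measure" P ..
  show ?thesis unfolding M_eq by unfold_locales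
qed

lemma sets_M: "sets (example_measure r R c p :: ('a::euclidean_space \<times> bool) measure) = sets (borel \<Otimes>\<^sub>M count_space UNIV)"
  unfolding M_eq D_def P_def by (intro sets_pair_measure_cong) auto

lemma nn_integral_M:
  fixes g :: "'a::euclidean_space \<times> bool \<Rightarrow> real"
  assumes g[measurable]: "g \<in> borel_measurable (borel \<Otimes>\<^sub>M count_space UNIV)"
    and g0: "\<And>\<omega>. g \<omega> \<ge> 0"
  shows "(\<integral>\<^sup>+\<omega>. ennreal (g \<omega>) \<partial>example_measure r R c p)
    = (\<integral>\<^sup>+y. ennreal (mu_dens r R c y * (p * g (y, True) + (1 - p) * g (y, False))) \<partial>lborel)"
proof -
  interpret P: prob_space P by (rule prob_P)
  have gm: "(\<lambda>\<omega>. ennreal (g \<omega>)) \<in> borel_measurable ((D::'a measure) \<Otimes>\<^sub>M P)"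
    using g unfolding D_def P_def by measurable
  have "(\<integral>\<^sup>+\<omega>. ennreal (g \<omega>) \<partial>example_measure r R c p)
      = (\<integral>\<^sup>+x. \<integral>\<^sup>+b. ennreal (g (x, b)) \<partial>P \<partial>(D::'a measure))"
    unfolding M_eq using P.nn_integral_fst[OF gm] by simp
  also have "\<dots> = (\<integral>\<^sup>+x. ennreal (p * g (x, True) + (1 - p) * g (x, False)) \<partial>(D::'a measure))"
    unfolding P_def using p_nn p_le g0
    by (intro nn_integral_cong) (simp add: ennreal_plus ennreal_mult' mult.commute)
  also have "\<dots> = (\<integral>\<^sup>+y. ennreal (mu_dens r R c y) * ennreal (p * g (y, True) + (1 - p) * g (y, False)) \<partial>lborel)"
    unfolding D_def by (rule nn_integral_density) measurable
  also have "\<dots> = (\<integral>\<^sup>+y. ennreal (mu_dens r R c y * (p * g (y, True) + (1 - p) * g (y, False))) \<partial>lborel)"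
  proof (intro nn_integral_cong)
    fix y :: 'a
    have "0 \<le> p * g (y, True) + (1 - p) * g (y, False)" using p_nn p_le g0 by simp
    thus "ennreal (mu_dens r R c y) * ennreal (p * g (y, True) + (1 - p) * g (y, False))
      = ennreal (mu_dens r R c y * (p * g (y, True) + (1 - p) * g (y, False)))"
      using mu_dens_nonneg[OF r_pos rR c_nn c_le] by (metis ennreal_mult)
  qed
  finally show ?thesis .
qed

end

definition Bin :: "real \<Rightarrow> real \<Rightarrow> 'a::euclidean_space \<Rightarrow> real \<Rightarrow> 'a \<Rightarrow> real" where
  "Bin \<beta> r x \<delta> y = (if norm y < r then min (norm (x - y) powr (-\<beta>)) (\<delta> powr (-\<beta>)) else 0)"

definition Bo :: "real \<Rightarrow> real \<Rightarrow> real \<Rightarrow> 'a::euclidean_space \<Rightarrow> 'a \<times> bool \<Rightarrow> real" where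
  "Bo \<beta> r R x \<omega> = (if 3 * r \<le> norm (fst \<omega>) \<and> norm (fst \<omega>) \<le> R
      then (if snd \<omega> then -1 else 1) * norm (x - fst \<omega>) powr (-\<beta>) else 0)"

definition Bf :: "real \<Rightarrow> real \<Rightarrow> real \<Rightarrow> 'a::euclidean_space \<Rightarrow> real \<Rightarrow> 'a \<times> bool \<Rightarrow> real" where
  "Bf \<beta> r R x \<delta> \<omega> = Bo \<beta> r R x \<omega> - Bin \<beta> r x \<delta> (fst \<omega>)"

lemma Bin_meas[measurable]: "Bin \<beta> r x \<delta> \<in> borel_measurable borel"
  unfolding Bin_def by measurable

lemma Bo_meas[measurable]: "Bo \<beta> r R x \<in> borel_measurable (borel \<Otimes>\<^sub>M count_space UNIV)"
  unfolding Bo_def by measurable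

lemma Bf_meas[measurable]: "Bf \<beta> r R x \<delta> \<in> borel_measurable (borel \<Otimes>\<^sub>M count_space UNIV)"
  unfolding Bf_def by measurable

context setting
begin

lemma inner_nn:
  fixes x :: "'a::euclidean_space" and h :: "'a \<Rightarrow> real" and s K :: real
  assumes s: "0 < s" "s < real DIM('a)" and K: "K \<ge> 0"
    and hm[measurable]: "h \<in> borel_measurable borel"
    and h0: "\<And>y. 0 \<le> h y" and hin: "\<And>y. norm y < r \<Longrightarrow> h y \<le> K * norm (x - y) powr (-s)"
    and hout: "\<And>y. \<not> norm y < r \<Longrightarrow> h y = 0"
  shows "(\<integral>\<^sup>+y. ennreal (mu_dens r R c y * h y) \<partial>lborel) \<le> ennreal (3 * c * K * real DIM('a) / (real DIM('a) - s) * r powr (-s))"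
proof -
  define V where "V = Vd TYPE('a)"
  define d where "d = real DIM('a)"
  have V: "V > 0" unfolding V_def by (rule Vd_pos)
  define C0 where "C0 = c / (V * r ^ DIM('a)) * K"
  have C0: "C0 \<ge> 0" unfolding C0_def using c_nn V r_pos K by simp
  have pw: "mu_dens r R c y * h y \<le> C0 * (indicator (ball 0 r) y * norm (x - y) powr (-s))" for y
  proof (cases "norm y < r")
    case True
    have "mu_dens r R c y = c / (V * r ^ DIM('a))" using True unfolding mu_dens_def V_def by simp
    hence "mu_dens r R c y * h y = c / (V * r ^ DIM('a)) * h y" by simp
    also have "\<dots> \<le> c / (V * r ^ DIM('a)) * (K * norm (x - y) powr (-s))"
      using hin[OF True] c_nn V r_pos by (intro mult_left_mono) auto
    finally show ?thesis using True unfolding C0_def by (simp add: dist_norm mult_ac)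
  next
    case False
    thus ?thesis using hout[OF False] C0 by (simp add: dist_norm)
  qed
  have "(\<integral>\<^sup>+y. ennreal (mu_dens r R c y * h y) \<partial>lborel)
      \<le> (\<integral>\<^sup>+y. ennreal C0 * ennreal (indicator (ball 0 r) y * norm (x - y) powr (-s)) \<partial>lborel)"
    by (rule nn_integral_mono) (use pw C0 in \<open>auto simp: ennreal_mult[symmetric] intro!: ennreal_leI\<close>)
  also have "\<dots> = ennreal C0 * (\<integral>\<^sup>+y. ennreal (indicator (ball 0 r) y * norm (x - y) powr (-s)) \<partial>lborel)"
    by (rule nn_integral_cmult) measurable
  also have "\<dots> \<le> ennreal C0 * ennreal (3 * d / (d - s) * V * r powr (d - s))"
  proof -
    have "(\<integral>\<^sup>+y. ennreal (indicator (ball 0 r) y * norm (x - y) powr (-s)) \<partial>lborel)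
       \<le> ennreal (3 * d / (d - s) * V * r powr (d - s))"
      using dyadic_bound[OF s r_pos, where x=x and z=0] unfolding d_def V_def by simp
    thus ?thesis by (rule mult_left_mono) auto
  qed
  also have "\<dots> = ennreal (C0 * (3 * d / (d - s) * V * r powr (d - s)))"
  proof -
    have nn: "0 \<le> 3 * d / (d - s) * V * r powr (d - s)" using s V unfolding d_def by simp
    show ?thesis using C0 nn by (metis ennreal_mult)
  qed
  also have "C0 * (3 * d / (d - s) * V * r powr (d - s)) = 3 * c * K * d / (d - s) * r powr (-s)"
  proof -
    have rd: "r ^ DIM('a) = r powr d" using r_pos unfolding d_def by (simp add: powr_realpow)
    have "r powr (d - s) = r powr d * r powr (-s)" using powr_add[of r "d" "-s"] by simp
    thus ?thesis unfolding C0_def rd using V r_pos by (simp add: field_simps)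
  qed
  finally show ?thesis unfolding d_def .
qed

end

lemma min_sq_bound:
  fixes u \<delta> \<beta> \<alpha> \<sigma> :: real
  assumes u: "u \<ge> 0" and \<delta>: "\<delta> > 0" and \<alpha>: "\<alpha> > 0" and \<sigma>: "\<sigma> \<ge> 0" and sum: "\<alpha> + \<sigma> = 2 * \<beta>"
  shows "(min (u powr (-\<beta>)) (\<delta> powr (-\<beta>)))\<^sup>2 \<le> \<delta> powr (-\<sigma>) * u powr (-\<alpha>)"
proof (cases "u = 0")
  case True thus ?thesis by simp
next
  case False
  hence u0: "u > 0" using u by simp
  have sq: "(v powr (-\<beta>))\<^sup>2 = v powr (-\<sigma>) * v powr (-\<alpha>)" if "v > 0" for v :: real
  proof -
    have "(v powr (-\<beta>))\<^sup>2 = v powr (real 2 * (-\<beta>))" using that by (intro powr_power) simp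
    also have "real 2 * (-\<beta>) = -\<sigma> + -\<alpha>" using sum by simp
    also have "v powr (-\<sigma> + -\<alpha>) = v powr (-\<sigma>) * v powr (-\<alpha>)" by (rule powr_add)
    finally show ?thesis .
  qed
  show ?thesis
  proof (cases "u \<ge> \<delta>")
    case True
    have "min (u powr (-\<beta>)) (\<delta> powr (-\<beta>)) = u powr (-\<beta>)"
    proof (intro min_absorb1)
      have "\<beta> > 0" using \<alpha> \<sigma> sum by linarith
      thus "u powr (-\<beta>) \<le> \<delta> powr (-\<beta>)" using True \<delta> by (intro powr_mono2') auto
    qed
    hence "(min (u powr (-\<beta>)) (\<delta> powr (-\<beta>)))\<^sup>2 = u powr (-\<sigma>) * u powr (-\<alpha>)" using sq[OF u0] by simp
    also have "\<dots> \<le> \<delta> powr (-\<sigma>) * u powr (-\<alpha>)"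
      using True \<delta> \<sigma> by (intro mult_right_mono powr_mono2') auto
    finally show ?thesis .
  next
    case False
    have "min (u powr (-\<beta>)) (\<delta> powr (-\<beta>)) \<le> \<delta> powr (-\<beta>)" by simp
    hence "(min (u powr (-\<beta>)) (\<delta> powr (-\<beta>)))\<^sup>2 \<le> (\<delta> powr (-\<beta>))\<^sup>2"
      by (intro power_mono) auto
    also have "\<dots> = \<delta> powr (-\<sigma>) * \<delta> powr (-\<alpha>)" using sq[OF \<delta>] .
    also have "\<dots> \<le> \<delta> powr (-\<sigma>) * u powr (-\<alpha>)"
      using False u0 \<alpha> by (intro mult_left_mono powr_mono2') auto
    finally show ?thesis .
  qed
qed

locale setting2 = setting +
  fixes x :: "'a::euclidean_space" and \<beta> \<delta> :: real
  assumes x_le: "norm x \<le> r" and \<beta>_pos: "0 < \<beta>" and \<beta>_lt: "\<beta> < real DIM('a)"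
    and \<delta>_pos: "0 < \<delta>" and p_half: "p \<le> 1/2"
begin

abbreviation M :: "('a \<times> bool) measure" where "M \<equiv> example_measure r R c p"

lemma probM: "prob_space M" by (rule prob_M)

lemma measM: "f \<in> borel_measurable (borel \<Otimes>\<^sub>M count_space UNIV) \<Longrightarrow> f \<in> borel_measurable M"
  by (simp add: measurable_cong_sets[OF sets_M refl])

lemma Bin_nn: "0 \<le> Bin \<beta> r x \<delta> y" unfolding Bin_def by simp

lemma Bin_le: "Bin \<beta> r x \<delta> y \<le> \<delta> powr (-\<beta>)" unfolding Bin_def by simp

lemma ann_dist:
  assumes "3 * r \<le> norm y" "norm y \<le> R"
  shows "2 * r \<le> norm (x - y)" "norm (x - y) \<le> R + r"
proof -
  have "norm y - norm x \<le> norm (x - y)" by (metis norm_minus_commute norm_triangle_ineq2)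
  thus "2 * r \<le> norm (x - y)" using assms x_le by simp
  have "norm (x - y) \<le> norm x + norm y" by (rule norm_triangle_ineq4)
  thus "norm (x - y) \<le> R + r" using assms x_le by simp
qed

lemma ann_pow:
  assumes "3 * r \<le> norm y" "norm y \<le> R"
  shows "norm (x - y) powr (-\<beta>) \<le> (2 * r) powr (-\<beta>)"
    "(R + r) powr (-\<beta>) \<le> norm (x - y) powr (-\<beta>)"
  using ann_dist[OF assms] r_pos \<beta>_pos by (auto intro!: powr_mono2')

lemma Bo_abs: "\<bar>Bo \<beta> r R x \<omega>\<bar> \<le> (2 * r) powr (-\<beta>)"
  unfolding Bo_def using ann_pow(1) by auto

lemma Bf_abs: "\<bar>Bf \<beta> r R x \<delta> \<omega>\<bar> \<le> (2 * r) powr (-\<beta>) + \<delta> powr (-\<beta>)"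
  unfolding Bf_def using Bo_abs[of \<omega>] Bin_nn[of "fst \<omega>"] Bin_le[of "fst \<omega>"] by linarith

lemma int_bounded:
  fixes K :: real
  assumes "f \<in> borel_measurable (borel \<Otimes>\<^sub>M count_space UNIV)" "\<And>\<omega>. \<bar>f \<omega>\<bar> \<le> K"
  shows "integrable M f"
proof -
  interpret prob_space M by (rule probM)
  show ?thesis by (rule integrable_const_bound[where B=K]) (use assms measM in auto)
qed

end

lemma enn2real_le: "X \<le> ennreal B \<Longrightarrow> 0 \<le> B \<Longrightarrow> enn2real X \<le> B"
  by (metis enn2real_ennreal enn2real_mono ennreal_less_top)

lemma enn2real_ge: "ennreal B \<le> X \<Longrightarrow> X < top \<Longrightarrow> 0 \<le> B \<Longrightarrow> B \<le> enn2real X"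
  by (metis enn2real_ennreal enn2real_mono)

context setting2
begin

lemma E_Bin_sq_gen:
  fixes K s :: real and h :: "'a \<Rightarrow> real"
  assumes s: "0 < s" "s < real DIM('a)" and K: "K \<ge> 0"
    and hm[measurable]: "h \<in> borel_measurable borel"
    and h0: "\<And>y. 0 \<le> h y" and hin: "\<And>y. norm y < r \<Longrightarrow> h y \<le> K * norm (x - y) powr (-s)"
    and hout: "\<And>y. \<not> norm y < r \<Longrightarrow> h y = 0"
  shows "integral\<^sup>L M (\<lambda>\<omega>. h (fst \<omega>)) \<le> 3 * c * K * real DIM('a) / (real DIM('a) - s) * r powr (-s)"
proof -
  have "integral\<^sup>L M (\<lambda>\<omega>. h (fst \<omega>)) = enn2real (\<integral>\<^sup>+\<omega>. ennreal (h (fst \<omega>)) \<partial>M)"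
    by (rule integral_eq_nn_integral) (auto intro!: measM simp: h0)
  also have "(\<integral>\<^sup>+\<omega>. ennreal (h (fst \<omega>)) \<partial>M)
      = (\<integral>\<^sup>+y. ennreal (mu_dens r R c y * (p * h y + (1 - p) * h y)) \<partial>lborel)"
    using nn_integral_M[of "\<lambda>\<omega>. h (fst \<omega>)"] h0 by simp
  also have "\<dots> = (\<integral>\<^sup>+y. ennreal (mu_dens r R c y * h y) \<partial>lborel)"
    by (simp add: algebra_simps)
  finally have eq: "integral\<^sup>L M (\<lambda>\<omega>. h (fst \<omega>)) = enn2real (\<integral>\<^sup>+y. ennreal (mu_dens r R c y * h y) \<partial>lborel)" .
  have "(\<integral>\<^sup>+y. ennreal (mu_dens r R c y * h y) \<partial>lborel)
      \<le> ennreal (3 * c * K * real DIM('a) / (real DIM('a) - s) * r powr (-s))"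
    by (rule inner_nn[OF s K hm h0 hin hout])
  thus ?thesis unfolding eq by (rule enn2real_le) (use s K c_nn in simp)
qed

lemma E_Bin: "integral\<^sup>L M (\<lambda>\<omega>. Bin \<beta> r x \<delta> (fst \<omega>)) \<le> 3 * c * real DIM('a) / (real DIM('a) - \<beta>) * r powr (-\<beta>)"
  using E_Bin_sq_gen[OF \<beta>_pos \<beta>_lt, of 1 "Bin \<beta> r x \<delta>"] by (simp add: Bin_nn Bin_def)

lemma E_Bin2:
  assumes \<alpha>: "0 < \<alpha>" "\<alpha> < real DIM('a)" and \<sigma>: "\<sigma> \<ge> 0" and sum: "\<alpha> + \<sigma> = 2 * \<beta>"
  shows "integral\<^sup>L M (\<lambda>\<omega>. (Bin \<beta> r x \<delta> (fst \<omega>))\<^sup>2) \<le> 3 * c * \<delta> powr (-\<sigma>) * real DIM('a) / (real DIM('a) - \<alpha>) * r powr (-\<alpha>)"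
proof (rule E_Bin_sq_gen[OF \<alpha>])
  show "(\<lambda>y. (Bin \<beta> r x \<delta> y)\<^sup>2) \<in> borel_measurable borel" by measurable
  fix y :: 'a
  show "norm y < r \<Longrightarrow> (Bin \<beta> r x \<delta> y)\<^sup>2 \<le> \<delta> powr (-\<sigma>) * norm (x - y) powr (-\<alpha>)"
    unfolding Bin_def using min_sq_bound[OF _ \<delta>_pos \<alpha>(1) \<sigma> sum] by simp
  show "\<not> norm y < r \<Longrightarrow> (Bin \<beta> r x \<delta> y)\<^sup>2 = 0" unfolding Bin_def by simp
qed auto

end

context setting2
begin

definition hA :: "'a \<Rightarrow> real" where
  "hA y = indicator (annulus r R) y * norm (x - y) powr (-\<beta>)"

lemma hA_meas[measurable]: "hA \<in> borel_measurable borel"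
  unfolding hA_def by measurable

lemma hA_nn: "0 \<le> hA y" unfolding hA_def by simp

lemma hA_le: "hA y \<le> (2 * r) powr (-\<beta>)"
  unfolding hA_def using ann_pow(1)[of y] r_pos by (auto simp: indicator_def annulus_iff)

definition Hn :: ennreal where
  "Hn = (\<integral>\<^sup>+y. ennreal (mu_dens r R c y * hA y) \<partial>lborel)"

lemma mu_nn: "0 \<le> mu_dens r R c y"
  by (rule mu_dens_nonneg[OF r_pos rR c_nn c_le])

lemma Hn_finite: "Hn < top"
proof -
  have "Hn \<le> (\<integral>\<^sup>+y. ennreal ((2 * r) powr (-\<beta>)) * ennreal (mu_dens r R c (y::'a)) \<partial>lborel)"
    unfolding Hn_def
  proof (rule nn_integral_mono)
    fix y :: 'a
    have "mu_dens r R c y * hA y \<le> (2 * r) powr (-\<beta>) * mu_dens r R c y"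
      using mu_nn[of y] hA_le[of y] by (simp add: mult.commute mult_left_mono)
    thus "ennreal (mu_dens r R c y * hA y) \<le> ennreal ((2 * r) powr (-\<beta>)) * ennreal (mu_dens r R c y)"
      using mu_nn[of y] by (simp add: ennreal_mult[symmetric] ennreal_leI)
  qed
  also have "\<dots> = ennreal ((2 * r) powr (-\<beta>)) * (\<integral>\<^sup>+y. ennreal (mu_dens r R c (y::'a)) \<partial>lborel)"
    by (rule nn_integral_cmult) measurable
  also have "\<dots> = ennreal ((2 * r) powr (-\<beta>))"
    using nn_integral_mu[OF r_pos rR c_nn c_le, where 'a='a] by simp
  finally show ?thesis using ennreal_less_top le_less_trans by blast
qed

lemma Hn_lower: "ennreal ((1 - c) * (R + r) powr (-\<beta>)) \<le> Hn"
proof -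
  define V where "V = Vd TYPE('a)"
  define d where "d = DIM('a)"
  have V: "V > 0" unfolding V_def by (rule Vd_pos)
  have Rd: "(3 * r) ^ d < R ^ d" using r_pos rR unfolding d_def by (intro power_strict_mono) auto
  define b where "b = (1 - c) / (V * (R ^ d - (3 * r) ^ d))"
  have b0: "b \<ge> 0" unfolding b_def using c_le V Rd by simp
  have "ennreal ((R + r) powr (-\<beta>) * b) * emeasure lborel (annulus r R :: 'a set)
      = (\<integral>\<^sup>+y. ennreal ((R + r) powr (-\<beta>) * b) * indicator (annulus r R) (y::'a) \<partial>lborel)"
    by (rule nn_integral_cmult_indicator[symmetric]) simp
  also have "\<dots> \<le> Hn" unfolding Hn_def
  proof (rule nn_integral_mono)
    fix y :: 'a
    show "ennreal ((R + r) powr (-\<beta>) * b) * indicator (annulus r R) y \<le> ennreal (mu_dens r R c y * hA y)"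
    proof (cases "y \<in> annulus r R")
      case True
      hence ann: "3 * r \<le> norm y" "norm y \<le> R" by (auto simp: annulus_iff)
      have "mu_dens r R c y = b" using ann r_pos unfolding mu_dens_def b_def V_def d_def by (auto simp: Let_def)
      moreover have "hA y = norm (x - y) powr (-\<beta>)" using True unfolding hA_def by simp
      ultimately have "mu_dens r R c y * hA y \<ge> b * (R + r) powr (-\<beta>)"
        using ann_pow(2)[OF ann] b0 by (simp add: mult_left_mono)
      thus ?thesis using True by (simp add: ennreal_leI mult.commute)
    next
      case False thus ?thesis by simp
    qed
  qed
  finally have le: "ennreal ((R + r) powr (-\<beta>) * b) * emeasure lborel (annulus r R :: 'a set) \<le> Hn" .
  have "ennreal ((R + r) powr (-\<beta>) * b) * emeasure lborel (annulus r R :: 'a set)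
      = ennreal ((R + r) powr (-\<beta>) * b * (V * (R ^ d - (3 * r) ^ d)))"
    using emeasure_annulus[OF r_pos rR, where 'a='a] b0 V Rd unfolding V_def d_def
    by (simp add: ennreal_mult[symmetric])
  also have "(R + r) powr (-\<beta>) * b * (V * (R ^ d - (3 * r) ^ d)) = (1 - c) * (R + r) powr (-\<beta>)"
    unfolding b_def using V Rd by simp
  finally show ?thesis using le by simp
qed

lemma Bo_split: "Bo \<beta> r R x \<omega> = (if snd \<omega> then 0 else hA (fst \<omega>)) - (if snd \<omega> then hA (fst \<omega>) else 0)"
  unfolding Bo_def hA_def by (auto simp: annulus_iff)

lemma E_Bo: "integral\<^sup>L M (Bo \<beta> r R x) = (1 - 2 * p) * enn2real Hn"
proof -
  define Bp where "Bp \<omega> = (if snd \<omega> then 0 else hA (fst \<omega>))" for \<omega> :: "'a \<times> bool"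
  define Bm where "Bm \<omega> = (if snd \<omega> then hA (fst \<omega>) else 0)" for \<omega> :: "'a \<times> bool"
  have Bpm[measurable]: "Bp \<in> borel_measurable (borel \<Otimes>\<^sub>M count_space UNIV)"
    "Bm \<in> borel_measurable (borel \<Otimes>\<^sub>M count_space UNIV)" unfolding Bp_def Bm_def by measurable
  have Bp_nn: "0 \<le> Bp \<omega>" and Bm_nn: "0 \<le> Bm \<omega>" for \<omega> unfolding Bp_def Bm_def by (auto simp: hA_nn)
  have ip: "integrable M Bp"
    by (rule int_bounded[where K="(2 * r) powr (-\<beta>)"]) (auto simp: Bp_def hA_nn hA_le)
  have im: "integrable M Bm"
    by (rule int_bounded[where K="(2 * r) powr (-\<beta>)"]) (auto simp: Bm_def hA_nn hA_le)
  have "integral\<^sup>L M (Bo \<beta> r R x) = integral\<^sup>L M (\<lambda>\<omega>. Bp \<omega> - Bm \<omega>)"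
    unfolding Bo_split Bp_def Bm_def ..
  also have "\<dots> = integral\<^sup>L M Bp - integral\<^sup>L M Bm" by (rule Bochner_Integration.integral_diff[OF ip im])
  also have "integral\<^sup>L M Bp = (1 - p) * enn2real Hn"
  proof -
    have "integral\<^sup>L M Bp = enn2real (\<integral>\<^sup>+\<omega>. ennreal (Bp \<omega>) \<partial>M)"
      by (rule integral_eq_nn_integral) (auto intro!: measM simp: Bp_nn)
    also have "(\<integral>\<^sup>+\<omega>. ennreal (Bp \<omega>) \<partial>M) = (\<integral>\<^sup>+y. ennreal (mu_dens r R c y * (p * Bp (y, True) + (1 - p) * Bp (y, False))) \<partial>lborel)"
      by (rule nn_integral_M[OF Bpm(1) Bp_nn])
    also have "\<dots> = (\<integral>\<^sup>+y. ennreal (1 - p) * ennreal (mu_dens r R c y * hA y) \<partial>lborel)"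
      proof (intro nn_integral_cong)
      fix y :: 'a
      have "mu_dens r R c y * (p * Bp (y, True) + (1 - p) * Bp (y, False)) = (1 - p) * (mu_dens r R c y * hA y)"
        by (simp add: Bp_def)
      thus "ennreal (mu_dens r R c y * (p * Bp (y, True) + (1 - p) * Bp (y, False))) = ennreal (1 - p) * ennreal (mu_dens r R c y * hA y)"
        using p_le by (simp only:) (rule ennreal_mult', simp)
    qed
    also have "\<dots> = ennreal (1 - p) * Hn" unfolding Hn_def by (rule nn_integral_cmult) measurable
    finally show ?thesis using p_le by (simp add: enn2real_mult)
  qed
  also have "integral\<^sup>L M Bm = p * enn2real Hn"
  proof -
    have "integral\<^sup>L M Bm = enn2real (\<integral>\<^sup>+\<omega>. ennreal (Bm \<omega>) \<partial>M)"
      by (rule integral_eq_nn_integral) (auto intro!: measM simp: Bm_nn)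
    also have "(\<integral>\<^sup>+\<omega>. ennreal (Bm \<omega>) \<partial>M) = (\<integral>\<^sup>+y. ennreal (mu_dens r R c y * (p * Bm (y, True) + (1 - p) * Bm (y, False))) \<partial>lborel)"
      by (rule nn_integral_M[OF Bpm(2) Bm_nn])
    also have "\<dots> = (\<integral>\<^sup>+y. ennreal p * ennreal (mu_dens r R c y * hA y) \<partial>lborel)"
      proof (intro nn_integral_cong)
      fix y :: 'a
      have "mu_dens r R c y * (p * Bm (y, True) + (1 - p) * Bm (y, False)) = p * (mu_dens r R c y * hA y)"
        by (simp add: Bm_def)
      thus "ennreal (mu_dens r R c y * (p * Bm (y, True) + (1 - p) * Bm (y, False))) = ennreal p * ennreal (mu_dens r R c y * hA y)"
        using p_nn by (simp only:) (rule ennreal_mult', simp)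
    qed
    also have "\<dots> = ennreal p * Hn" unfolding Hn_def by (rule nn_integral_cmult) measurable
    finally show ?thesis using p_nn by (simp add: enn2real_mult)
  qed
  finally show ?thesis by (simp add: algebra_simps)
qed

end

context setting2
begin

lemma int_Bin: "integrable M (\<lambda>\<omega>. Bin \<beta> r x \<delta> (fst \<omega>))"
  by (rule int_bounded[where K="\<delta> powr (-\<beta>)"]) (auto simp: Bin_nn Bin_le abs_of_nonneg)

lemma int_Bin2: "integrable M (\<lambda>\<omega>. (Bin \<beta> r x \<delta> (fst \<omega>))\<^sup>2)"
proof (rule int_bounded[where K="(\<delta> powr (-\<beta>))\<^sup>2"])
  fix \<omega> :: "'a \<times> bool"
  show "\<bar>(Bin \<beta> r x \<delta> (fst \<omega>))\<^sup>2\<bar> \<le> (\<delta> powr (-\<beta>))\<^sup>2"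
    using Bin_nn Bin_le by (simp add: power_mono)
qed measurable

lemma int_Bo: "integrable M (Bo \<beta> r R x)"
  by (rule int_bounded[where K="(2 * r) powr (-\<beta>)"]) (auto simp: Bo_abs)

lemma int_Bf: "integrable M (Bf \<beta> r R x \<delta>)"
  by (rule int_bounded[where K="(2 * r) powr (-\<beta>) + \<delta> powr (-\<beta>)"]) (auto simp: Bf_abs)

lemma int_Bf2: "integrable M (\<lambda>\<omega>. (Bf \<beta> r R x \<delta> \<omega>)\<^sup>2)"
proof (rule int_bounded[where K="((2 * r) powr (-\<beta>) + \<delta> powr (-\<beta>))\<^sup>2"])
  fix \<omega> :: "'a \<times> bool"
  have "\<bar>Bf \<beta> r R x \<delta> \<omega>\<bar>\<^sup>2 \<le> ((2 * r) powr (-\<beta>) + \<delta> powr (-\<beta>))\<^sup>2"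
    using Bf_abs by (intro power_mono) auto
  thus "\<bar>(Bf \<beta> r R x \<delta> \<omega>)\<^sup>2\<bar> \<le> ((2 * r) powr (-\<beta>) + \<delta> powr (-\<beta>))\<^sup>2" by simp
qed measurable

lemma E_Bf: "integral\<^sup>L M (Bf \<beta> r R x \<delta>) \<ge> (1 - 2 * p) * ((1 - c) * (R + r) powr (-\<beta>))
   - 3 * c * real DIM('a) / (real DIM('a) - \<beta>) * r powr (-\<beta>)"
proof -
  have "integral\<^sup>L M (Bf \<beta> r R x \<delta>) = integral\<^sup>L M (Bo \<beta> r R x) - integral\<^sup>L M (\<lambda>\<omega>. Bin \<beta> r x \<delta> (fst \<omega>))"
    unfolding Bf_def by (rule Bochner_Integration.integral_diff[OF int_Bo int_Bin])
  moreover have "(1 - c) * (R + r) powr (-\<beta>) \<le> enn2real Hn"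
    using Hn_lower Hn_finite c_le by (intro enn2real_ge) auto
  hence "(1 - 2 * p) * ((1 - c) * (R + r) powr (-\<beta>)) \<le> integral\<^sup>L M (Bo \<beta> r R x)"
    unfolding E_Bo using p_half by (intro mult_left_mono) auto
  ultimately show ?thesis using E_Bin by linarith
qed

lemma E_Bf2:
  assumes \<alpha>: "0 < \<alpha>" "\<alpha> < real DIM('a)" and \<sigma>: "\<sigma> \<ge> 0" and sum: "\<alpha> + \<sigma> = 2 * \<beta>"
  shows "integral\<^sup>L M (\<lambda>\<omega>. (Bf \<beta> r R x \<delta> \<omega>)\<^sup>2)
    \<le> ((2 * r) powr (-\<beta>))\<^sup>2 + 3 * c * \<delta> powr (-\<sigma>) * real DIM('a) / (real DIM('a) - \<alpha>) * r powr (-\<alpha>)"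
proof -
  interpret prob_space M by (rule probM)
  define C where "C = ((2 * r) powr (-\<beta>))\<^sup>2"
  have pw: "(Bf \<beta> r R x \<delta> \<omega>)\<^sup>2 \<le> C + (Bin \<beta> r x \<delta> (fst \<omega>))\<^sup>2" for \<omega>
  proof (cases "3 * r \<le> norm (fst \<omega>)")
    case True
    have b0: "Bin \<beta> r x \<delta> (fst \<omega>) = 0" using True r_pos unfolding Bin_def by auto
    hence "Bf \<beta> r R x \<delta> \<omega> = Bo \<beta> r R x \<omega>" unfolding Bf_def by simp
    moreover have "\<bar>Bo \<beta> r R x \<omega>\<bar>\<^sup>2 \<le> C" unfolding C_def using Bo_abs by (intro power_mono) auto
    ultimately show ?thesis using b0 by simp
  next
    case False
    hence "Bo \<beta> r R x \<omega> = 0" unfolding Bo_def by auto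
    hence "(Bf \<beta> r R x \<delta> \<omega>)\<^sup>2 = (Bin \<beta> r x \<delta> (fst \<omega>))\<^sup>2" unfolding Bf_def by simp
    moreover have "C \<ge> 0" unfolding C_def by simp
    ultimately show ?thesis by simp
  qed
  have "integral\<^sup>L M (\<lambda>\<omega>. (Bf \<beta> r R x \<delta> \<omega>)\<^sup>2) \<le> integral\<^sup>L M (\<lambda>\<omega>. C + (Bin \<beta> r x \<delta> (fst \<omega>))\<^sup>2)"
    by (rule integral_mono[OF int_Bf2 _ pw]) (intro Bochner_Integration.integrable_add integrable_const int_Bin2)
  also have "\<dots> = C + integral\<^sup>L M (\<lambda>\<omega>. (Bin \<beta> r x \<delta> (fst \<omega>))\<^sup>2)"
    by (subst Bochner_Integration.integral_add) (auto intro: int_Bin2 simp: prob_space)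
  finally show ?thesis using E_Bin2[OF \<alpha> \<sigma> sum] unfolding C_def by linarith
qed

end

lemma PiM_comp_integral:
  fixes f :: "'b \<Rightarrow> real" and m i :: nat
  assumes pM: "prob_space M" and i: "i < m" and f[measurable]: "f \<in> borel_measurable M"
  shows "integral\<^sup>L (PiM {..<m} (\<lambda>_. M)) (\<lambda>S. f (S i)) = integral\<^sup>L M f"
proof -
  have "distr (PiM {..<m} (\<lambda>_. M)) M (\<lambda>S. S i) = M"
    using i pM by (intro distr_PiM_component) auto
  hence "integral\<^sup>L M f = integral\<^sup>L (distr (PiM {..<m} (\<lambda>_. M)) M (\<lambda>S. S i)) f" by simp
  also have "\<dots> = integral\<^sup>L (PiM {..<m} (\<lambda>_. M)) (\<lambda>S. f (S i))"
    using i by (intro integral_distr) auto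
  finally show ?thesis by simp
qed

lemma PiM_comp_measure:
  fixes m i :: nat
  assumes pM: "prob_space M" and i: "i < m" and A: "A \<in> sets M"
  shows "measure (PiM {..<m} (\<lambda>_. M)) {S \<in> space (PiM {..<m} (\<lambda>_. M)). S i \<in> A} = measure M A"
proof -
  have "distr (PiM {..<m} (\<lambda>_. M)) M (\<lambda>S. S i) = M"
    using i pM by (intro distr_PiM_component) auto
  hence "measure M A = measure (distr (PiM {..<m} (\<lambda>_. M)) M (\<lambda>S. S i)) A" by simp
  also have "\<dots> = measure (PiM {..<m} (\<lambda>_. M)) ((\<lambda>S. S i) -` A \<inter> space (PiM {..<m} (\<lambda>_. M)))"
    using i A by (intro measure_distr) auto
  finally show ?thesis by (simp add: Int_def conj_commute)
qed

lemma PiM_pair_integral: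
  fixes f :: "'b \<Rightarrow> real" and m i j :: nat
  assumes pM: "prob_space M" and i: "i < m" and j: "j < m" and ij: "i \<noteq> j" and f: "integrable M f"
  shows "integral\<^sup>L (PiM {..<m} (\<lambda>_. M)) (\<lambda>S. f (S i) * f (S j)) = (integral\<^sup>L M f)\<^sup>2"
proof -
  interpret PP: product_prob_space "\<lambda>_::nat. M" "{..<m}"
    by (simp add: product_prob_space_def product_prob_space_axioms_def product_sigma_finite_def
        pM prob_space_imp_sigma_finite)
  have one: "integral\<^sup>L M (\<lambda>_. 1::real) = 1" using prob_space.prob_space[OF pM] by simp
  define F where "F k = (if k \<in> {i, j} then f else (\<lambda>_. 1))" for k
  have intF: "integrable M (F k)" for k unfolding F_def using f by auto
  have "integral\<^sup>L (PiM {..<m} (\<lambda>_. M)) (\<lambda>S. \<Prod>k\<in>{..<m}. F k (S k)) = (\<Prod>k\<in>{..<m}. integral\<^sup>L M (F k))"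
    by (rule PP.product_integral_prod) (auto intro: intF)
  moreover have "(\<Prod>k\<in>{..<m}. F k (S k)) = f (S i) * f (S j)" for S
  proof -
    have "(\<Prod>k\<in>{..<m}. F k (S k)) = (\<Prod>k\<in>{..<m}. if k \<in> {i, j} then f (S k) else 1)"
      unfolding F_def by (intro prod.cong) auto
    also have "\<dots> = (\<Prod>k\<in>{..<m} \<inter> {i, j}. f (S k))" by (rule prod.inter_restrict[symmetric]) simp
    also have "{..<m} \<inter> {i, j} = {i, j}" using i j by auto
    finally show ?thesis using ij by simp
  qed
  moreover have "(\<Prod>k\<in>{..<m}. integral\<^sup>L M (F k)) = (integral\<^sup>L M f)\<^sup>2"
  proof -
    have "(\<Prod>k\<in>{..<m}. integral\<^sup>L M (F k)) = (\<Prod>k\<in>{..<m}. if k \<in> {i, j} then integral\<^sup>L M f else 1)"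
      unfolding F_def using one by (intro prod.cong) auto
    also have "\<dots> = (\<Prod>k\<in>{..<m} \<inter> {i, j}. integral\<^sup>L M f)" by (rule prod.inter_restrict[symmetric]) simp
    also have "{..<m} \<inter> {i, j} = {i, j}" using i j by auto
    finally show ?thesis using ij by (simp add: power2_eq_square)
  qed
  ultimately show ?thesis by simp
qed

lemma sum_le0_prob:
  fixes f :: "'b \<Rightarrow> real" and m :: nat and K :: real
  assumes pM: "prob_space M" and f[measurable]: "f \<in> borel_measurable M" and fb: "\<And>y. \<bar>f y\<bar> \<le> K"
    and mu: "integral\<^sup>L M f > 0" and m: "m > 0"
  shows "measure (PiM {..<m} (\<lambda>_. M)) {S \<in> space (PiM {..<m} (\<lambda>_. M)). (\<Sum>i<m. f (S i)) \<le> 0}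
    \<le> integral\<^sup>L M (\<lambda>y. (f y)\<^sup>2) / (real m * (integral\<^sup>L M f)\<^sup>2)"
proof -
  define Q where "Q = PiM {..<m} (\<lambda>_. M)"
  define \<mu> where "\<mu> = integral\<^sup>L M f"
  define g where "g y = f y - \<mu>" for y
  define Z where "Z S = (\<Sum>i<m. g (S i))" for S
  interpret Q: prob_space Q unfolding Q_def by (rule prob_space_PiM) (use pM in auto)
  interpret MM: prob_space M by (rule pM)
  have gm[measurable]: "g \<in> borel_measurable M" unfolding g_def by measurable
  have comp: "(\<lambda>S. S i) \<in> measurable Q M" if "i < m" for i
    unfolding Q_def by (rule measurable_component_singleton) (use that in simp)
  have gcm: "(\<lambda>S. g (S i)) \<in> borel_measurable Q" if "i < m" for i
    by (rule measurable_compose[OF comp[OF that] gm])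
  have Zm: "Z \<in> borel_measurable Q" unfolding Z_def by (rule borel_measurable_sum) (use gcm in auto)
  have K0: "K \<ge> 0" using fb[of undefined] by simp
  define K2 where "K2 = K + \<bar>\<mu>\<bar>"
  have gb: "\<bar>g y\<bar> \<le> K2" for y unfolding g_def K2_def using fb[of y] by linarith
  have intf: "integrable M f" by (rule MM.integrable_const_bound[where B=K]) (use fb in auto)
  have intf2: "integrable M (\<lambda>y. (f y)\<^sup>2)"
  proof (rule MM.integrable_const_bound[where B="K\<^sup>2"])
    show "AE y in M. norm ((f y)\<^sup>2) \<le> K\<^sup>2"
    proof -
      have "(f y)\<^sup>2 \<le> K\<^sup>2" for y using power_mono[OF fb[of y] abs_ge_zero, of 2] by simp
      thus ?thesis by simp
    qed
  qed measurable
  have intgg: "integrable Q (\<lambda>S. g (S i) * g (S j))" if "i < m" "j < m" for i j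
  proof (rule Q.integrable_const_bound[where B="K2 * K2"])
    show "AE S in Q. norm (g (S i) * g (S j)) \<le> K2 * K2"
    proof -
      have "\<bar>g (S i)\<bar> * \<bar>g (S j)\<bar> \<le> K2 * K2" for S
        using gb[of "S i"] gb[of "S j"] by (intro mult_mono) auto
      thus ?thesis by (simp add: abs_mult)
    qed
    show "(\<lambda>S. g (S i) * g (S j)) \<in> borel_measurable Q"
      using gcm[OF that(1)] gcm[OF that(2)] by measurable
  qed
  have Eg: "integral\<^sup>L M g = 0"
    unfolding g_def \<mu>_def using intf by (simp add: MM.prob_space)
  define V where "V = integral\<^sup>L M (\<lambda>y. g y * g y)"
  have V_eq: "V = integral\<^sup>L M (\<lambda>y. (f y)\<^sup>2) - \<mu>\<^sup>2"
    using MM.variance_eq[OF intf intf2] unfolding V_def g_def \<mu>_def by (simp add: power2_eq_square)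
  have cross: "integral\<^sup>L Q (\<lambda>S. g (S i) * g (S j)) = (if i = j then V else 0)" if "i < m" "j < m" for i j
  proof (cases "i = j")
    case True
    have "integral\<^sup>L Q (\<lambda>S. g (S i) * g (S i)) = integral\<^sup>L M (\<lambda>y. g y * g y)"
      unfolding Q_def by (rule PiM_comp_integral[OF pM that(1)]) measurable
    thus ?thesis using True unfolding V_def by simp
  next
    case False
    have "integrable M g" unfolding g_def using intf by simp
    hence "integral\<^sup>L Q (\<lambda>S. g (S i) * g (S j)) = (integral\<^sup>L M g)\<^sup>2"
      unfolding Q_def by (rule PiM_pair_integral[OF pM that False])
    thus ?thesis using False Eg by simp
  qed
  have Z2: "(Z S)\<^sup>2 = (\<Sum>i<m. \<Sum>j<m. g (S i) * g (S j))" for S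
    unfolding Z_def power2_eq_square by (rule sum_product)
  have intZ2: "integrable Q (\<lambda>S. (Z S)\<^sup>2)"
    unfolding Z2 by (intro Bochner_Integration.integrable_sum intgg) auto
  have EZ2: "integral\<^sup>L Q (\<lambda>S. (Z S)\<^sup>2) = real m * V"
  proof -
    have "integral\<^sup>L Q (\<lambda>S. (Z S)\<^sup>2) = (\<Sum>i<m. integral\<^sup>L Q (\<lambda>S. \<Sum>j<m. g (S i) * g (S j)))"
      unfolding Z2 by (rule Bochner_Integration.integral_sum) (intro Bochner_Integration.integrable_sum intgg; simp)
    also have "\<dots> = (\<Sum>i<m. \<Sum>j<m. integral\<^sup>L Q (\<lambda>S. g (S i) * g (S j)))"
      by (intro sum.cong refl Bochner_Integration.integral_sum intgg) auto
    also have "\<dots> = (\<Sum>i<m. \<Sum>j<m. if i = j then V else 0)"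
      by (intro sum.cong refl cross) auto
    also have "\<dots> = real m * V" by simp
    finally show ?thesis .
  qed
  have mu_pos: "\<mu> > 0" unfolding \<mu>_def by (rule mu)
  have c_pos: "(real m * \<mu>)\<^sup>2 > 0" using mu_pos m by simp
  have sub: "{S \<in> space Q. (\<Sum>i<m. f (S i)) \<le> 0} \<subseteq> {S \<in> space Q. (Z S)\<^sup>2 \<ge> (real m * \<mu>)\<^sup>2}"
  proof safe
    fix S assume "S \<in> space Q" and le: "(\<Sum>i<m. f (S i)) \<le> 0"
    have "Z S = (\<Sum>i<m. f (S i)) - real m * \<mu>" unfolding Z_def g_def by (simp add: sum_subtractf)
    hence "- Z S \<ge> real m * \<mu>" using le by simp
    hence "(real m * \<mu>)\<^sup>2 \<le> (- Z S)\<^sup>2" using mu_pos by (intro power_mono) auto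
    thus "(real m * \<mu>)\<^sup>2 \<le> (Z S)\<^sup>2" by simp
  qed
  have "measure Q {S \<in> space Q. (\<Sum>i<m. f (S i)) \<le> 0} \<le> measure Q {S \<in> space Q. (Z S)\<^sup>2 \<ge> (real m * \<mu>)\<^sup>2}"
    by (rule Q.finite_measure_mono[OF sub]) (use Zm in measurable)
  also have "\<dots> \<le> integral\<^sup>L Q (\<lambda>S. (Z S)\<^sup>2) / (real m * \<mu>)\<^sup>2"
    by (rule integral_Markov_inequality_measure[OF intZ2 _ _ c_pos, where A="space Q"]) auto
  also have "\<dots> = V / (real m * \<mu>\<^sup>2)" unfolding EZ2 using m mu_pos by (simp add: power2_eq_square field_simps)
  also have "\<dots> \<le> integral\<^sup>L M (\<lambda>y. (f y)\<^sup>2) / (real m * \<mu>\<^sup>2)"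
    unfolding V_eq using m mu_pos by (intro divide_right_mono) auto
  finally show ?thesis unfolding Q_def \<mu>_def .
qed

abbreviation Q0 :: "nat \<Rightarrow> (nat \<Rightarrow> 'a::euclidean_space \<times> bool) measure" where
  "Q0 m \<equiv> PiM {..<m} (\<lambda>_. borel \<Otimes>\<^sub>M count_space UNIV)"

lemma measurable_label_test:
  fixes x :: "'a::euclidean_space"
  shows "(\<lambda>S. (\<Sum>i<m. label r S i * norm (x - fst (S i)) powr (-\<beta>))) \<in> borel_measurable (Q0 m)"
  unfolding label_def fstar_def by measurable

lemma pred_test:
  fixes x :: "'a::euclidean_space"
  shows "(\<lambda>S. (\<Sum>i<m. if fst (S i) = x \<and> (\<forall>j\<in>{..<i}. fst (S j) \<noteq> x) then label r S i else 0)) \<in> borel_measurable (Q0 m)"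
  unfolding label_def fstar_def by measurable

definition Hfun :: "real \<Rightarrow> nat \<Rightarrow> real \<Rightarrow> 'a::euclidean_space \<Rightarrow> (nat \<Rightarrow> 'a \<times> bool) \<Rightarrow> real" where
  "Hfun \<beta> m r x S = (if \<exists>i\<in>{..<m}. fst (S i) = x
     then (\<Sum>i<m. if fst (S i) = x \<and> (\<forall>j\<in>{..<i}. fst (S j) \<noteq> x) then label r S i else 0)
     else sgn (\<Sum>i<m. label r S i * norm (x - fst (S i)) powr (-\<beta>)))"

lemma Hfun_meas: "Hfun \<beta> m r x \<in> borel_measurable (Q0 m)"
  unfolding Hfun_def label_def fstar_def by measurable

lemma hhat_eq_Hfun: "hhat \<beta> m r S x = Hfun \<beta> m r x S"
proof (cases "\<exists>i<m. fst (S i) = x")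
  case False
  thus ?thesis unfolding hhat_def Hfun_def by auto
next
  case True
  define i0 where "i0 = (LEAST i. i < m \<and> fst (S i) = x)"
  have i0: "i0 < m \<and> fst (S i0) = x" unfolding i0_def using True by (metis (mono_tags, lifting) LeastI)
  have min: "\<not> (j < m \<and> fst (S j) = x)" if "j < i0" for j
    unfolding i0_def using that i0_def not_less_Least by blast
  have cond: "(fst (S i) = x \<and> (\<forall>j\<in>{..<i}. fst (S j) \<noteq> x)) \<longleftrightarrow> i = i0" if "i < m" for i
  proof
    assume a: "fst (S i) = x \<and> (\<forall>j\<in>{..<i}. fst (S j) \<noteq> x)"
    show "i = i0"
    proof (rule ccontr)
      assume "i \<noteq> i0"
      hence "i < i0 \<or> i0 < i" by auto
      thus False
      proof
        assume "i < i0" thus False using min[of i] a that by auto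
      next
        assume "i0 < i" thus False using a i0 by auto
      qed
    qed
  next
    assume "i = i0"
    thus "fst (S i) = x \<and> (\<forall>j\<in>{..<i}. fst (S j) \<noteq> x)" using i0 min by auto
  qed
  have "(\<Sum>i<m. if fst (S i) = x \<and> (\<forall>j\<in>{..<i}. fst (S j) \<noteq> x) then label r S i else 0)
      = (\<Sum>i<m. if i = i0 then label r S i else 0)"
    by (intro sum.cong refl) (simp add: cond)
  also have "\<dots> = label r S i0" using i0 by simp
  finally show ?thesis using True unfolding hhat_def Hfun_def i0_def by auto
qed

lemma exists_in_prob:
  fixes m :: nat
  assumes pM: "prob_space M" and A: "A \<in> sets M"
  shows "measure (PiM {..<m} (\<lambda>_. M)) {S \<in> space (PiM {..<m} (\<lambda>_. M)). \<exists>i<m. S i \<in> A} \<le> real m * measure M A"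
proof -
  have "{S \<in> space (PiM {..<m} (\<lambda>_. M)). \<exists>i<m. S i \<in> A} = (\<Union>i\<in>{..<m}. {S \<in> space (PiM {..<m} (\<lambda>_. M)). S i \<in> A})"
    by auto
  hence "measure (PiM {..<m} (\<lambda>_. M)) {S \<in> space (PiM {..<m} (\<lambda>_. M)). \<exists>i<m. S i \<in> A}
     \<le> (\<Sum>i\<in>{..<m}. measure (PiM {..<m} (\<lambda>_. M)) {S \<in> space (PiM {..<m} (\<lambda>_. M)). S i \<in> A})"
    using A by (simp only:) (rule measure_UNION_le, auto)
  also have "\<dots> = (\<Sum>i\<in>{..<m}. measure M A)"
    by (intro sum.cong refl PiM_comp_measure[OF pM _ A]) auto
  finally show ?thesis by simp
qed

context setting2
begin

definition Bad :: "'a set" where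
  "Bad = - (ball 0 r \<union> annulus r R) \<union> (ball 0 r \<inter> ball x \<delta>)"

lemma Bad_borel[measurable]: "Bad \<in> sets borel"
  unfolding Bad_def by measurable

lemma term_ge:
  assumes "fst \<omega> \<notin> Bad"
  shows "(if snd \<omega> then - fstar r (fst \<omega>) else fstar r (fst \<omega>)) * norm (x - fst \<omega>) powr (-\<beta>)
         \<ge> Bf \<beta> r R x \<delta> \<omega>"
proof -
  define y where "y = fst \<omega>"
  have "y \<in> ball 0 r \<union> annulus r R" and nb: "\<not> (y \<in> ball 0 r \<and> y \<in> ball x \<delta>)"
    using assms unfolding Bad_def y_def by auto
  thus ?thesis
  proof (elim UnE)
    assume yin: "y \<in> ball 0 r"
    hence ny: "norm y < r" by simp
    have ud: "\<delta> \<le> norm (x - y)" using nb yin by (simp add: dist_norm)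
    have "norm (x - y) powr (-\<beta>) \<le> \<delta> powr (-\<beta>)" using ud \<delta>_pos \<beta>_pos by (intro powr_mono2') auto
    hence Bin_eq: "Bin \<beta> r x \<delta> y = norm (x - y) powr (-\<beta>)" unfolding Bin_def using ny by simp
    have Bo0: "Bo \<beta> r R x \<omega> = 0" unfolding Bo_def using ny r_pos y_def by auto
    have fs: "fstar r y = -1" unfolding fstar_def using ny by simp
    have "- (norm (x - y) powr (-\<beta>)) \<le> (if snd \<omega> then 1 else (- 1)) * (norm (x - y) powr (-\<beta>))" by simp
    thus ?thesis unfolding Bf_def Bo0 Bin_eq y_def[symmetric] fs by simp
  next
    assume yin: "y \<in> annulus r R"
    hence ann: "3 * r \<le> norm y" "norm y \<le> R" by (auto simp: annulus_iff)
    have Bin0: "Bin \<beta> r x \<delta> y = 0" unfolding Bin_def using ann r_pos by auto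
    have fs: "fstar r y = 1" unfolding fstar_def using ann r_pos by auto
    show ?thesis unfolding Bf_def Bo_def Bin0 y_def[symmetric] fs using ann by simp
  qed
qed

lemma good_hhat:
  assumes good: "\<forall>i<m. fst (S i) \<notin> Bad" and pos: "(\<Sum>i<m. Bf \<beta> r R x \<delta> (S i)) > 0"
  shows "hhat \<beta> m r S x = 1"
proof -
  have notx: "\<not> (\<exists>i<m. fst (S i) = x)"
  proof
    assume "\<exists>i<m. fst (S i) = x"
    then obtain i where i: "i < m" "fst (S i) = x" by blast
    have "x \<notin> Bad" using good i by auto
    moreover have "x \<in> ball 0 r \<or> x \<in> annulus r R" using \<open>x \<notin> Bad\<close> unfolding Bad_def by auto
    ultimately show False using \<delta>_pos x_le r_pos unfolding Bad_def by (auto simp: annulus_iff)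
  qed
  have "(\<Sum>i<m. Bf \<beta> r R x \<delta> (S i)) \<le> (\<Sum>i<m. label r S i * norm (x - fst (S i)) powr (-\<beta>))"
    unfolding label_def using good term_ge by (intro sum_mono) auto
  hence "(\<Sum>i<m. label r S i * norm (x - fst (S i)) powr (-\<beta>)) > 0" using pos by linarith
  moreover have "hhat \<beta> m r S x = sgn (\<Sum>i<m. label r S i * norm (x - fst (S i)) powr (-\<beta>))"
    unfolding hhat_def using notx by auto
  ultimately show ?thesis by simp
qed

lemma bad_prob: "measure M {\<omega> \<in> space M. fst \<omega> \<in> Bad} \<le> c * (\<delta> / r) ^ DIM('a)"
proof -
  define V where "V = Vd TYPE('a)"
  have V: "V > 0" unfolding V_def by (rule Vd_pos)
  have K0: "c / (V * r ^ DIM('a)) \<ge> 0" using c_nn V r_pos by simp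
  have meas: "{\<omega> \<in> space M. fst \<omega> \<in> Bad} \<in> sets M"
  proof -
    have "(\<lambda>\<omega>. indicator Bad (fst \<omega>) :: real) \<in> borel_measurable M" by (rule measM) measurable
    hence "(\<lambda>\<omega>. indicator Bad (fst \<omega>) :: real) -` {1} \<inter> space M \<in> sets M" by measurable
    moreover have "(\<lambda>\<omega>. indicator Bad (fst \<omega>) :: real) -` {1} \<inter> space M = {\<omega> \<in> space M. fst \<omega> \<in> Bad}"
      by (auto simp: indicator_def)
    ultimately show ?thesis by simp
  qed
  have "emeasure M {\<omega> \<in> space M. fst \<omega> \<in> Bad} = (\<integral>\<^sup>+\<omega>. indicator {\<omega> \<in> space M. fst \<omega> \<in> Bad} \<omega> \<partial>M)"
    using meas by simp
  also have "\<dots> = (\<integral>\<^sup>+\<omega>. ennreal (indicator Bad (fst \<omega>)) \<partial>M)"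
    by (intro nn_integral_cong) (auto simp: indicator_def)
  also have "\<dots> = (\<integral>\<^sup>+y. ennreal (mu_dens r R c y * (p * indicator Bad y + (1 - p) * indicator Bad y)) \<partial>lborel)"
    using nn_integral_M[of "\<lambda>\<omega>. indicator Bad (fst \<omega>)"] by simp
  also have "\<dots> \<le> (\<integral>\<^sup>+y. ennreal (c / (V * r ^ DIM('a))) * indicator (ball x \<delta>) y \<partial>lborel)"
  proof (rule nn_integral_mono)
    fix y :: 'a
    have "mu_dens r R c y * (p * indicator Bad y + (1 - p) * indicator Bad y)
        \<le> c / (V * r ^ DIM('a)) * indicator (ball x \<delta>) y"
    proof (cases "y \<in> Bad")
      case False thus ?thesis using K0 by (simp add: indicator_def)
    next
      case True
      show ?thesis
      proof (cases "y \<in> ball 0 r")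
        case yb: True
        hence "y \<in> ball x \<delta>" using True unfolding Bad_def by auto
        moreover have "mu_dens r R c y = c / (V * r ^ DIM('a))"
          using yb unfolding mu_dens_def V_def by simp
        ultimately show ?thesis using True by (simp add: algebra_simps)
      next
        case False
        hence "y \<notin> annulus r R" using True unfolding Bad_def by auto
        hence "mu_dens r R c y = 0" using False unfolding mu_dens_def by (auto simp: annulus_iff)
        thus ?thesis using K0 by (simp add: indicator_def)
      qed
    qed
    hence "ennreal (mu_dens r R c y * (p * indicator Bad y + (1 - p) * indicator Bad y))
        \<le> ennreal (c / (V * r ^ DIM('a)) * indicator (ball x \<delta>) y)" by (rule ennreal_leI)
    also have "ennreal (c / (V * r ^ DIM('a)) * indicator (ball x \<delta>) y)
       = ennreal (c / (V * r ^ DIM('a))) * indicator (ball x \<delta>) y" by (simp add: indicator_def)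
    finally show "ennreal (mu_dens r R c y * (p * indicator Bad y + (1 - p) * indicator Bad y))
        \<le> ennreal (c / (V * r ^ DIM('a))) * indicator (ball x \<delta>) y" .
  qed
  also have "\<dots> = ennreal (c / (V * r ^ DIM('a))) * emeasure lborel (ball x \<delta>)"
    by (rule nn_integral_cmult_indicator) simp
  also have "\<dots> = ennreal (c / (V * r ^ DIM('a)) * (V * \<delta> ^ DIM('a)))"
  proof -
    have eb: "emeasure lborel (ball x \<delta>) = ennreal (V * \<delta> ^ DIM('a))"
      unfolding V_def using \<delta>_pos by (intro emeasure_ball_Vd) simp
    have nn: "0 \<le> V * \<delta> ^ DIM('a)" using V \<delta>_pos by simp
    show ?thesis unfolding eb using K0 nn by (metis ennreal_mult)
  qed
  also have "c / (V * r ^ DIM('a)) * (V * \<delta> ^ DIM('a)) = c * (\<delta> / r) ^ DIM('a)"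
    using V r_pos by (simp add: power_divide)
  finally have "emeasure M {\<omega> \<in> space M. fst \<omega> \<in> Bad} \<le> ennreal (c * (\<delta> / r) ^ DIM('a))" .
  thus ?thesis unfolding measure_def using c_nn \<delta>_pos r_pos by (intro enn2real_le) auto
qed

end

context setting2
begin

abbreviation Q :: "nat \<Rightarrow> (nat \<Rightarrow> 'a \<times> bool) measure" where
  "Q m \<equiv> sample_measure m r R c p"

lemma Q_eq: "Q m = PiM {..<m} (\<lambda>_. M)" unfolding sample_measure_def ..

lemma sets_Q: "sets (Q m) = sets (Q0 m)"
  unfolding Q_eq by (rule sets_PiM_cong) (auto simp: sets_M)

lemma measQ: "f \<in> borel_measurable (Q0 m) \<Longrightarrow> f \<in> borel_measurable (Q m)"
  by (simp add: measurable_cong_sets[OF sets_Q refl])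

lemma main_prob:
  assumes m: "m > 0" and mu: "integral\<^sup>L M (Bf \<beta> r R x \<delta>) > 0"
  shows "measure (Q m) {S \<in> space (Q m). hhat \<beta> m r S x = 1}
    \<ge> 1 - real m * (c * (\<delta> / r) ^ DIM('a))
        - integral\<^sup>L M (\<lambda>\<omega>. (Bf \<beta> r R x \<delta> \<omega>)\<^sup>2) / (real m * (integral\<^sup>L M (Bf \<beta> r R x \<delta>))\<^sup>2)"
proof -
  interpret QQ: prob_space "Q m" unfolding Q_eq by (rule prob_space_PiM) (use probM in auto)
  define BadM where "BadM = {\<omega> \<in> space M. fst \<omega> \<in> Bad}"
  have BadM_sets: "BadM \<in> sets M"
  proof -
    have "(\<lambda>\<omega>. indicator Bad (fst \<omega>) :: real) \<in> borel_measurable M" by (rule measM) measurable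
    hence "(\<lambda>\<omega>. indicator Bad (fst \<omega>) :: real) -` {1} \<inter> space M \<in> sets M" by measurable
    moreover have "(\<lambda>\<omega>. indicator Bad (fst \<omega>) :: real) -` {1} \<inter> space M = BadM"
      unfolding BadM_def by (auto simp: indicator_def)
    ultimately show ?thesis by simp
  qed
  define B1 where "B1 = {S \<in> space (Q m). \<exists>i<m. S i \<in> BadM}"
  define B2 where "B2 = {S \<in> space (Q m). (\<Sum>i<m. Bf \<beta> r R x \<delta> (S i)) \<le> 0}"
  define H where "H = {S \<in> space (Q m). hhat \<beta> m r S x = 1}"
  have spaceM: "S i \<in> space M" if "S \<in> space (Q m)" "i < m" for S i
    using that unfolding Q_eq by (auto simp: space_PiM)
  have B1_sets: "B1 \<in> sets (Q m)"
  proof -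
    have "B1 = (\<Union>i\<in>{..<m}. {S \<in> space (Q m). S i \<in> BadM})" unfolding B1_def by auto
    also have "\<dots> \<in> sets (Q m)"
    proof (intro sets.finite_UN)
      fix i assume "i \<in> {..<m}"
      hence "(\<lambda>S. S i) \<in> measurable (Q m) M" unfolding Q_eq by (intro measurable_component_singleton) auto
      thus "{S \<in> space (Q m). S i \<in> BadM} \<in> sets (Q m)"
        using BadM_sets measurable_sets[of "\<lambda>S. S i" "Q m" M BadM] by (simp add: Int_def conj_commute vimage_def)
    qed auto
    finally show ?thesis .
  qed
  have sumf: "(\<lambda>S. \<Sum>i<m. Bf \<beta> r R x \<delta> (S i)) \<in> borel_measurable (Q m)"
    by (rule measQ) measurable
  have B2_sets: "B2 \<in> sets (Q m)"
  proof -
    have "(\<lambda>S. \<Sum>i<m. Bf \<beta> r R x \<delta> (S i)) -` {..0} \<inter> space (Q m) \<in> sets (Q m)"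
      by (rule measurable_sets[OF sumf]) simp
    moreover have "(\<lambda>S. \<Sum>i<m. Bf \<beta> r R x \<delta> (S i)) -` {..0} \<inter> space (Q m) = B2" unfolding B2_def by auto
    ultimately show ?thesis by simp
  qed
  have H_sets: "H \<in> sets (Q m)"
  proof -
    have hm: "(\<lambda>S. hhat \<beta> m r S x) \<in> borel_measurable (Q m)"
      unfolding hhat_eq_Hfun by (rule measQ) (rule Hfun_meas)
    have "(\<lambda>S. hhat \<beta> m r S x) -` {1} \<inter> space (Q m) \<in> sets (Q m)"
      by (rule measurable_sets[OF hm]) simp
    moreover have "(\<lambda>S. hhat \<beta> m r S x) -` {1} \<inter> space (Q m) = H" unfolding H_def by auto
    ultimately show ?thesis by simp
  qed
  have sub: "space (Q m) - (B1 \<union> B2) \<subseteq> H"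
  proof
    fix S assume S: "S \<in> space (Q m) - (B1 \<union> B2)"
    have "\<forall>i<m. fst (S i) \<notin> Bad" using S spaceM unfolding B1_def BadM_def by auto
    moreover have "(\<Sum>i<m. Bf \<beta> r R x \<delta> (S i)) > 0" using S unfolding B2_def by auto
    ultimately have "hhat \<beta> m r S x = 1" by (rule good_hhat)
    thus "S \<in> H" using S unfolding H_def by auto
  qed
  have "QQ.prob H \<ge> QQ.prob (space (Q m) - (B1 \<union> B2))"
    by (rule QQ.finite_measure_mono[OF sub H_sets])
  moreover have "QQ.prob (space (Q m) - (B1 \<union> B2)) = 1 - QQ.prob (B1 \<union> B2)"
    using B1_sets B2_sets by (intro QQ.prob_compl) auto
  moreover have "QQ.prob (B1 \<union> B2) \<le> QQ.prob B1 + QQ.prob B2"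
    by (rule measure_Un_le[OF B1_sets B2_sets])
  moreover have "QQ.prob B1 \<le> real m * (c * (\<delta> / r) ^ DIM('a))"
  proof -
    have "QQ.prob B1 \<le> real m * measure M BadM"
      unfolding B1_def Q_eq by (rule exists_in_prob[OF probM BadM_sets])
    also have "\<dots> \<le> real m * (c * (\<delta> / r) ^ DIM('a))"
      using bad_prob unfolding BadM_def by (intro mult_left_mono) auto
    finally show ?thesis .
  qed
  moreover have "QQ.prob B2 \<le> integral\<^sup>L M (\<lambda>\<omega>. (Bf \<beta> r R x \<delta> \<omega>)\<^sup>2) / (real m * (integral\<^sup>L M (Bf \<beta> r R x \<delta>))\<^sup>2)"
    unfolding B2_def Q_eq
    by (rule sum_le0_prob[OF probM _ Bf_abs mu m]) (rule measM, measurable)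
  ultimately show ?thesis unfolding H_def by linarith
qed

end

lemma F_delta:
  fixes m r \<beta> :: real and n :: nat
  assumes "m > 0" "r > 0" "\<beta> > 0"
  shows "(r * m powr (-1/\<beta>) / r) ^ n = m powr (- real n / \<beta>)"
proof -
  have "(r * m powr (-1/\<beta>) / r) ^ n = (m powr (-1/\<beta>)) ^ n" using assms by simp
  also have "\<dots> = m powr (real n * (-1/\<beta>))" using assms by (intro powr_power) simp
  finally show ?thesis by simp
qed

lemma F_mass:
  fixes m d \<beta> :: real
  assumes "m > 0" "\<beta> > 0"
  shows "m * m powr (- d / \<beta>) = 1 / m powr ((d - \<beta>) / \<beta>)"
proof -
  have e1: "m powr (1 + - d / \<beta>) = m * m powr (- d / \<beta>)" using powr_add[of m 1 "- d / \<beta>"] assms by simp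
  have e2: "1 + - d / \<beta> = - ((d - \<beta>) / \<beta>)" using assms by (simp add: field_simps)
  have e3: "m powr (- ((d - \<beta>) / \<beta>)) = 1 / m powr ((d - \<beta>) / \<beta>)" by (rule powr_minus_divide)
  show ?thesis using e1 e2 e3 by simp
qed

lemma F3:
  fixes m r \<beta> \<alpha> \<sigma> :: real
  assumes "m > 0" "r > 0" "\<beta> > 0" "\<alpha> + \<sigma> = 2 * \<beta>"
  shows "(r * m powr (-1/\<beta>)) powr (-\<sigma>) * r powr (-\<alpha>) = r powr (-2 * \<beta>) * m powr (\<sigma> / \<beta>)"
proof -
  have "(r * m powr (-1/\<beta>)) powr (-\<sigma>) = r powr (-\<sigma>) * (m powr (-1/\<beta>)) powr (-\<sigma>)"
    using assms by (simp add: powr_mult)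
  also have "(m powr (-1/\<beta>)) powr (-\<sigma>) = m powr (\<sigma> / \<beta>)" by (simp add: powr_powr)
  finally have "(r * m powr (-1/\<beta>)) powr (-\<sigma>) * r powr (-\<alpha>) = (r powr (-\<sigma>) * r powr (-\<alpha>)) * m powr (\<sigma> / \<beta>)"
    by (simp add: mult_ac)
  also have "r powr (-\<sigma>) * r powr (-\<alpha>) = r powr (-\<sigma> + -\<alpha>)" by (rule powr_add[symmetric])
  also have "-\<sigma> + -\<alpha> = -2 * \<beta>" using assms by simp
  finally show ?thesis .
qed

lemma F5:
  fixes m d \<beta> :: real
  assumes m: "m > 1" and d: "d > 0" and \<beta>: "\<beta> > 0"
  defines "\<epsilon> \<equiv> d / (1 + ln m)"
  defines "\<sigma> \<equiv> 2 * \<beta> - min (2 * \<beta>) (d - \<epsilon>)"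
  shows "m powr (\<sigma> / \<beta>) \<le> exp (d / \<beta>) * (1 + m powr ((2 * \<beta> - d) / \<beta>))"
proof (cases "2 * \<beta> \<le> d - \<epsilon>")
  case True
  hence "\<sigma> = 0" unfolding \<sigma>_def by simp
  moreover have "exp (d / \<beta>) \<ge> 1" using d \<beta> by simp
  moreover have "m powr ((2 * \<beta> - d) / \<beta>) \<ge> 0" by simp
  ultimately have "1 * 1 \<le> exp (d / \<beta>) * (1 + m powr ((2 * \<beta> - d) / \<beta>))"
    by (intro mult_mono) auto
  thus ?thesis using \<open>\<sigma> = 0\<close> by simp
next
  case False
  hence s: "\<sigma> = 2 * \<beta> - d + \<epsilon>" unfolding \<sigma>_def by simp
  have L: "ln m > 0" using m by simp
  have "\<sigma> / \<beta> = (2 * \<beta> - d) / \<beta> + \<epsilon> / \<beta>" unfolding s using \<beta> by (simp add: field_simps)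
  hence "m powr (\<sigma> / \<beta>) = m powr ((2 * \<beta> - d) / \<beta>) * m powr (\<epsilon> / \<beta>)" by (simp add: powr_add)
  also have "m powr (\<epsilon> / \<beta>) \<le> exp (d / \<beta>)"
  proof -
    have "m powr (\<epsilon> / \<beta>) = exp (\<epsilon> / \<beta> * ln m)" using m by (simp add: powr_def)
    also have "\<epsilon> / \<beta> * ln m = (d / \<beta>) * (ln m / (1 + ln m))" unfolding \<epsilon>_def using L by (simp add: field_simps)
    also have "\<dots> \<le> d / \<beta>" using L d \<beta> by (intro mult_left_le) auto
    finally show ?thesis by simp
  qed
  hence "m powr ((2 * \<beta> - d) / \<beta>) * m powr (\<epsilon> / \<beta>) \<le> m powr ((2 * \<beta> - d) / \<beta>) * exp (d / \<beta>)"
    by (intro mult_left_mono) auto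
  also have "\<dots> \<le> exp (d / \<beta>) * (1 + m powr ((2 * \<beta> - d) / \<beta>))" by (simp add: algebra_simps)
  finally show ?thesis .
qed

theorem lemma7:
  fixes \<beta> R r c :: real
  assumes "0 < \<beta>" "\<beta> < real DIM('a::euclidean_space)"
    and "0 < r" "0 < c" "R > 3 * r"
    and "c \<le> (1 - \<beta> / real DIM('a)) / (2400 * (1 + R / r) powr \<beta>)"
  shows "\<exists>(m0::nat) (C::real) (k::nat). \<forall>(x::'a) m p.
           x \<in> cball 0 r \<longrightarrow> m > m0 \<longrightarrow> 0 < p \<longrightarrow> p < 0.49 \<longrightarrow>
           measure (sample_measure m r R c p)
             {S \<in> space (sample_measure m r R c p). hhat \<beta> m r S x = 1}
           \<ge> 1 - C * ln (real m) ^ k *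
                 (1 / real m + 1 / real m powr ((1 - \<beta> / real DIM('a)) / (\<beta> / real DIM('a))))"
proof -
  note \<beta>_pos = assms(1) and \<beta>_lt = assms(2) and r_pos = assms(3) and c_pos = assms(4)
    and rR = assms(5) and c_le = assms(6)
  define d where "d = real DIM('a)"
  have d_pos: "d > 0" unfolding d_def by simp
  have \<beta>d: "\<beta> < d" unfolding d_def by (rule \<beta>_lt)
  define W where "W = (R + r) powr (-\<beta>)"
  have W_pos: "W > 0" unfolding W_def using r_pos rR by simp
  define \<mu>0 where "\<mu>0 = W / 100"
  have \<mu>0_pos: "\<mu>0 > 0" unfolding \<mu>0_def using W_pos by simp
  define A0 where "A0 = ((2 * r) powr (-\<beta>))\<^sup>2"
  define A1 where "A1 = 3 * c * r powr (-2 * \<beta>) * exp (d / \<beta>)"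
  have A0_nn: "A0 \<ge> 0" unfolding A0_def by simp
  have A1_nn: "A1 \<ge> 0" unfolding A1_def using c_pos by simp
  define C where "C = c + (A0 + 2 * A1) / \<mu>0\<^sup>2"
  define e where "e = (d - \<beta>) / \<beta>"
  have e_eq: "(1 - \<beta> / real DIM('a)) / (\<beta> / real DIM('a)) = e"
    unfolding e_def d_def[symmetric] using d_pos \<beta>_pos by (simp add: field_simps)
  define P where "P = (1 + R / r) powr \<beta>"
  have P_ge: "P \<ge> 1" unfolding P_def using r_pos rR \<beta>_pos by (intro ge_one_powr_ge_zero) auto
  have q1: "0 < 1 - \<beta> / d" "1 - \<beta> / d \<le> 1" using \<beta>d d_pos \<beta>_pos by (auto simp: field_simps)
  have c_le': "c \<le> (1 - \<beta> / d) / (2400 * P)" using c_le unfolding d_def P_def .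
  have c_small: "c \<le> 1 / 2400"
  proof -
    have h: "(1 - \<beta> / d) / (2400 * P) \<le> 1 / (2400 * 1)"
      using q1 P_ge by (intro frac_le) auto
    show ?thesis using c_le' h by linarith
  qed
  have key_c: "3 * c * d / (d - \<beta>) * r powr (-\<beta>) \<le> W / 800"
  proof -
    have "3 * c * d / (d - \<beta>) * r powr (-\<beta>) = c * (3 * d / (d - \<beta>) * r powr (-\<beta>))" by simp
    also have "\<dots> \<le> (1 - \<beta> / d) / (2400 * P) * (3 * d / (d - \<beta>) * r powr (-\<beta>))"
      using c_le' \<beta>d d_pos by (intro mult_right_mono) auto
    also have "\<dots> = r powr (-\<beta>) / (800 * P)"
      using \<beta>d d_pos P_ge by (simp add: field_simps)
    also have "r powr (-\<beta>) / P = W"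
    proof -
      have rr: "r * (1 + R / r) = R + r" using r_pos by (simp add: field_simps)
      have "W = (r * (1 + R / r)) powr (-\<beta>)" unfolding W_def rr ..
      also have "\<dots> = r powr (-\<beta>) * (1 + R / r) powr (-\<beta>)" using r_pos rR by (simp add: powr_mult)
      also have "(1 + R / r) powr (-\<beta>) = 1 / P" unfolding P_def by (simp add: powr_minus_divide)
      finally show ?thesis by simp
    qed
    hence "r powr (-\<beta>) / (800 * P) = W / 800" by (simp add: field_simps)
    finally show ?thesis .
  qed
  show ?thesis
  proof (rule exI[of _ "3::nat"], rule exI[of _ C], rule exI[of _ "1::nat"], intro allI impI)
    fix x :: 'a and m :: nat and p :: real
    assume x: "x \<in> cball 0 r" and m: "m > 3" and p0: "0 < p" and p1: "p < 0.49"
    define mr where "mr = real m"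
    have mr4: "mr \<ge> 4" unfolding mr_def using m by simp
    define L where "L = ln mr"
    have L1: "L \<ge> 1"
    proof -
      have "ln (272/100) \<le> ln mr" using mr4 by (subst ln_le_cancel_iff) auto
      thus ?thesis unfolding L_def using ln_272_gt_1 by linarith
    qed
    define \<delta> where "\<delta> = r * mr powr (-1/\<beta>)"
    have \<delta>_pos: "\<delta> > 0" unfolding \<delta>_def using r_pos mr4 by simp
    interpret S2: setting2 r R c p x \<beta> \<delta>
      by unfold_locales (use r_pos rR c_pos c_small p0 p1 x \<beta>_pos \<beta>_lt \<delta>_pos in auto)
    define \<mu> where "\<mu> = integral\<^sup>L S2.M (Bf \<beta> r R x \<delta>)"
    have \<mu>_ge: "\<mu> \<ge> \<mu>0"
    proof -
      have "\<mu> \<ge> (1 - 2 * p) * ((1 - c) * W) - 3 * c * d / (d - \<beta>) * r powr (-\<beta>)"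
        using S2.E_Bf unfolding \<mu>_def W_def d_def .
      moreover have "(1 - 2 * p) * ((1 - c) * W) \<ge> (1/50) * ((2399/2400) * W)"
        using p1 c_small W_pos by (intro mult_mono) auto
      ultimately show ?thesis using key_c W_pos unfolding \<mu>0_def by linarith
    qed
    have \<mu>_pos: "\<mu> > 0" using \<mu>_ge \<mu>0_pos by linarith
    define \<epsilon> where "\<epsilon> = d / (1 + L)"
    have \<epsilon>_pos: "\<epsilon> > 0" unfolding \<epsilon>_def using d_pos L1 by simp
    have \<epsilon>_lt: "\<epsilon> < d" unfolding \<epsilon>_def using d_pos L1 by (simp add: field_simps)
    define \<alpha> where "\<alpha> = min (2 * \<beta>) (d - \<epsilon>)"
    define \<sigma> where "\<sigma> = 2 * \<beta> - \<alpha>"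
    have \<alpha>_pos: "\<alpha> > 0" unfolding \<alpha>_def using \<beta>_pos \<epsilon>_lt by simp
    have \<alpha>_lt: "\<alpha> < real DIM('a)" unfolding \<alpha>_def d_def[symmetric] using \<epsilon>_pos by simp
    have \<sigma>_nn: "\<sigma> \<ge> 0" unfolding \<sigma>_def \<alpha>_def by simp
    have sum: "\<alpha> + \<sigma> = 2 * \<beta>" unfolding \<sigma>_def by simp
    define E2 where "E2 = integral\<^sup>L S2.M (\<lambda>\<omega>. (Bf \<beta> r R x \<delta> \<omega>)\<^sup>2)"
    define e2 where "e2 = (2 * \<beta> - d) / \<beta>"
    have E2_le: "E2 \<le> A0 + A1 * (1 + L) * (1 + mr powr e2)"
    proof -
      have "E2 \<le> ((2 * r) powr (-\<beta>))\<^sup>2 + 3 * c * \<delta> powr (-\<sigma>) * d / (d - \<alpha>) * r powr (-\<alpha>)"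
        using S2.E_Bf2[OF \<alpha>_pos \<alpha>_lt \<sigma>_nn sum] unfolding E2_def d_def .
      also have "3 * c * \<delta> powr (-\<sigma>) * d / (d - \<alpha>) * r powr (-\<alpha>)
          = 3 * c * (\<delta> powr (-\<sigma>) * r powr (-\<alpha>)) * (d / (d - \<alpha>))" by simp
      also have "\<delta> powr (-\<sigma>) * r powr (-\<alpha>) = r powr (-2 * \<beta>) * mr powr (\<sigma> / \<beta>)"
        unfolding \<delta>_def using F3[of mr r \<beta> \<alpha> \<sigma>] mr4 r_pos \<beta>_pos sum by simp
      also have "3 * c * (r powr (-2 * \<beta>) * mr powr (\<sigma> / \<beta>)) * (d / (d - \<alpha>))
          \<le> 3 * c * (r powr (-2 * \<beta>) * (exp (d / \<beta>) * (1 + mr powr e2))) * (1 + L)"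
      proof (intro mult_mono mult_left_mono)
        show "mr powr (\<sigma> / \<beta>) \<le> exp (d / \<beta>) * (1 + mr powr e2)"
          using F5[of mr d \<beta>] mr4 d_pos \<beta>_pos unfolding \<sigma>_def \<alpha>_def \<epsilon>_def L_def e2_def by simp
        show "d / (d - \<alpha>) \<le> 1 + L"
        proof -
          have "d - \<alpha> \<ge> \<epsilon>" unfolding \<alpha>_def by simp
          hence "d / (d - \<alpha>) \<le> d / \<epsilon>" using \<epsilon>_pos d_pos by (intro divide_left_mono) auto
          also have "d / \<epsilon> = 1 + L" unfolding \<epsilon>_def using d_pos L1 by simp
          finally show ?thesis .
        qed
      qed (use c_pos \<alpha>_lt d_def in auto)
      also have "3 * c * (r powr (-2 * \<beta>) * (exp (d / \<beta>) * (1 + mr powr e2))) * (1 + L)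
          = A1 * (1 + L) * (1 + mr powr e2)" unfolding A1_def by (simp add: mult_ac)
      finally show ?thesis unfolding A0_def by simp
    qed
    have main: "measure (sample_measure m r R c p) {S \<in> space (sample_measure m r R c p). hhat \<beta> m r S x = 1}
        \<ge> 1 - mr * (c * (\<delta> / r) ^ DIM('a)) - E2 / (mr * \<mu>\<^sup>2)"
      using S2.main_prob[of m] m \<mu>_pos unfolding \<mu>_def E2_def mr_def by simp
    define T1 where "T1 = 1 / mr"
    define T2 where "T2 = 1 / mr powr e"
    have T1_nn: "T1 \<ge> 0" and T2_nn: "T2 \<ge> 0" unfolding T1_def T2_def using mr4 by auto
    have bad1: "mr * (c * (\<delta> / r) ^ DIM('a)) = c * T2"
    proof -
      have "(\<delta> / r) ^ DIM('a) = mr powr (- d / \<beta>)"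
        unfolding \<delta>_def d_def using F_delta[of mr r \<beta> "DIM('a)"] mr4 r_pos \<beta>_pos by simp
      hence "mr * (c * (\<delta> / r) ^ DIM('a)) = c * (mr * mr powr (- d / \<beta>))" by simp
      also have "mr * mr powr (- d / \<beta>) = T2" unfolding T2_def e_def using F_mass[of mr \<beta> d] mr4 \<beta>_pos by simp
      finally show ?thesis .
    qed
    have E2_nn: "E2 \<ge> 0" unfolding E2_def by simp
    have bad2: "E2 / (mr * \<mu>\<^sup>2) \<le> (A0 + A1 * (1 + L) * (1 + mr powr e2)) / (mr * \<mu>0\<^sup>2)"
    proof -
      have "E2 / (mr * \<mu>\<^sup>2) \<le> E2 / (mr * \<mu>0\<^sup>2)"
        using E2_nn mr4 \<mu>0_pos \<mu>_ge by (intro divide_left_mono mult_left_mono power_mono mult_pos_pos) auto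
      also have "\<dots> \<le> (A0 + A1 * (1 + L) * (1 + mr powr e2)) / (mr * \<mu>0\<^sup>2)"
        using E2_le mr4 \<mu>0_pos by (intro divide_right_mono) auto
      finally show ?thesis .
    qed
    have me2: "mr powr e2 / mr = T2"
    proof -
      have "mr powr e2 / mr = mr powr e2 * mr powr (-1)" using mr4 by (simp add: powr_minus_divide divide_inverse powr_minus)
      also have "\<dots> = mr powr (e2 + -1)" by (rule powr_add[symmetric])
      also have "e2 + -1 = - e" unfolding e2_def e_def using \<beta>_pos by (simp add: field_simps)
      finally show ?thesis unfolding T2_def by (simp add: powr_minus_divide)
    qed
    have split: "(A0 + A1 * (1 + L) * (1 + mr powr e2)) / (mr * \<mu>0\<^sup>2)
        = (A0 * T1 + A1 * (1 + L) * (T1 + T2)) / \<mu>0\<^sup>2"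
    proof -
      have "(1 + mr powr e2) / mr = T1 + T2" using me2 unfolding T1_def by (simp add: add_divide_distrib)
      thus ?thesis unfolding T1_def using mr4 \<mu>0_pos by (simp add: field_simps)
    qed
    have fin: "c * T2 + (A0 * T1 + A1 * (1 + L) * (T1 + T2)) / \<mu>0\<^sup>2 \<le> C * L * (T1 + T2)"
    proof -
      have a: "c * T2 \<le> c * L * (T1 + T2)"
      proof -
        have h1: "1 * T2 \<le> L * T2" by (rule mult_right_mono[OF L1 T2_nn])
        have h2: "0 \<le> L * T1" using L1 T1_nn by simp
        have "T2 \<le> L * (T1 + T2)" using h1 h2 by (simp add: distrib_left)
        thus ?thesis using c_pos by (simp add: mult.assoc mult_left_mono)
      qed
      have b: "A0 * T1 \<le> A0 * (L * (T1 + T2))"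
      proof -
        have h1: "1 * T1 \<le> L * T1" by (rule mult_right_mono[OF L1 T1_nn])
        have h2: "0 \<le> L * T2" using L1 T2_nn by simp
        have "T1 \<le> L * (T1 + T2)" using h1 h2 by (simp add: distrib_left)
        thus ?thesis using A0_nn by (rule mult_left_mono)
      qed
      have bb: "A1 * (1 + L) * (T1 + T2) \<le> 2 * A1 * (L * (T1 + T2))"
      proof -
        have "(1 + L) * (T1 + T2) \<le> (2 * L) * (T1 + T2)" using L1 T1_nn T2_nn by (intro mult_right_mono) auto
        hence "A1 * ((1 + L) * (T1 + T2)) \<le> A1 * ((2 * L) * (T1 + T2))" using A1_nn by (rule mult_left_mono)
        thus ?thesis by (simp add: mult_ac)
      qed
      have "(A0 * T1 + A1 * (1 + L) * (T1 + T2)) / \<mu>0\<^sup>2 \<le> (A0 + 2 * A1) * (L * (T1 + T2)) / \<mu>0\<^sup>2"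
        using b bb \<mu>0_pos by (intro divide_right_mono) (auto simp: algebra_simps)
      with a show ?thesis unfolding C_def by (simp add: algebra_simps)
    qed
    have "measure (sample_measure m r R c p) {S \<in> space (sample_measure m r R c p). hhat \<beta> m r S x = 1}
        \<ge> 1 - C * L * (T1 + T2)"
      using main bad1 bad2 split fin by linarith
    thus "measure (sample_measure m r R c p) {S \<in> space (sample_measure m r R c p). hhat \<beta> m r S x = 1}
        \<ge> 1 - C * ln (real m) ^ 1 * (1 / real m + 1 / real m powr ((1 - \<beta> / real DIM('a)) / (\<beta> / real DIM('a))))"
      unfolding e_eq L_def T1_def T2_def mr_def by simp
  qed
qed

end
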